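(* Let $\mathbb{T}$ be the $m$-regular tree, let $L$ be the averaging operator with parameter $\beta\in[0,1]$, and let $h:\mathbb{T}\to\mathbb{R}$. Then for every continuous $f:[0,1]\to\mathbb{R}$ there exists a unique bounded function $u:\mathbb{T}\to\mathbb{R}$ with $L(u)(x)=h(x)$ for all $x\in\mathbb{T}$ and $u|_{\partial\mathbb{T}}=f$, if and only if: $0\le\beta<\tfrac12$, the series defining $S^\beta_h(x)$ converges for every $x\in\mathbb{T}$, and $$\lim_{k\to\infty}\ \sup_{x\in\mathbb{T},\,|x|=k}\ \Big|\sum_{j=1}^{k}\Big(\frac{\beta}{1-\beta}\Big)^{k-j}S^\beta_h(x^j)\Big|=0 .$$
   Context: The $m$-regular tree $\mathbb{T}$ ($m\ge 2$): its nodes are the root $\emptyset$ and all finite tuples $x=(a_1,\dots,a_k)$ with $a_i\in\{0,\dots,m-1\}$; $|x|=k$ is the level of $x$. For $x\neq\emptyset$, $\hat x$ denotes its predecessor. $S^l(x)$ is the set of the $m^l$ successors of $x$ at level $|x|+l$, $S^0(x)=\{x\}$. For $|x|=k$ and $1\le j\le k$, $x^j$ is the predecessor of $x$ at level $j$ ($x^k=x$). A branch $z$ is an infinite sequence $(a_1,a_2,\dots)$ with nodes $z_n=(a_1,\dots,a_n)$; $\partial\mathbb{T}$ is the set of branches, $\psi(z)=\sum_{k\ge1}a_k m^{-k}$; $z$ passes through $x$ if $x=z_{|x|}$. Averaging operator: $L(u)(x)=u(x)-\beta u(\hat x)-(1-\beta)\frac1m\sum_{y\in S^1(x)}u(y)$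 for $x\ne\emptyset$, $L(u)(\emptyset)=u(\emptyset)-\frac1m\sum_{y\in S^1(\emptyset)}u(y)$. $u|_{\partial\mathbb{T}}=f$ means: for every $\varepsilon>0$ there is $K$ such that $|u(x)-f(\psi(z))|<\varepsilon$ for all nodes $x$ with $|x|\ge K$ and all branches $z$ through $x$. For $\beta\in[0,1)$, $S^\beta_h(x)=\sum_{i=1}^\infty\sum_{j=0}^{i-1}\frac{\beta^{i-j-1}}{(1-\beta)^{i-j}}\frac{1}{m^j}\sum_{y\in S^j(x)}h(y)$ (equal to $\frac1\beta\sum_{i\ge1}\sum_{j=0}^{i-1}(\frac{\beta}{1-\beta})^{i-j}m^{-j}\sum_{y\in S^j(x)}h(y)$ when $\beta>0$); convention $0^0=1$. *)

theory Defs
  imports "HOL-Analysis.Analysis"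
begin

text \<open>Nodes of the m-regular tree: finite lists [a_1,...,a_k] with entries < m.
  The level |x| is length x, the predecessor of x is butlast x, and
  the predecessor at level j is take j x.\<close>

definition tree_nodes :: "nat \<Rightarrow> nat list set" where
  "tree_nodes m = {x. \<forall>a\<in>set x. a < m}"

definition succs :: "nat \<Rightarrow> nat \<Rightarrow> nat list \<Rightarrow> nat list set" where
  "succs m l x = {x @ w | w. length w = l \<and> (\<forall>a\<in>set w. a < m)}"

definition avg_op :: "nat \<Rightarrow> real \<Rightarrow> (nat list \<Rightarrow> real) \<Rightarrow> nat list \<Rightarrow> real" where
  "avg_op m \<beta> u x =
     (if x = [] then u [] - (1 / real m) * (\<Sum>a<m. u [a])
      else u x - \<beta> * u (butlast x) - (1 - \<beta>) * (1 / real m) * (\<Sum>a<m. u (x @ [a])))"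

text \<open>Branches: infinite sequences z with z i = a_(i+1) < m.\<close>
definition branches :: "nat \<Rightarrow> (nat \<Rightarrow> nat) set" where
  "branches m = {z. \<forall>i. z i < m}"

definition psi :: "nat \<Rightarrow> (nat \<Rightarrow> nat) \<Rightarrow> real" where
  "psi m z = (\<Sum>i. real (z i) / real m ^ Suc i)"

definition passes_through :: "(nat \<Rightarrow> nat) \<Rightarrow> nat list \<Rightarrow> bool" where
  "passes_through z x \<longleftrightarrow> x = map z [0..<length x]"

definition boundary_eq :: "nat \<Rightarrow> (nat list \<Rightarrow> real) \<Rightarrow> (real \<Rightarrow> real) \<Rightarrow> bool" where
  "boundary_eq m u f \<longleftrightarrow>
     (\<forall>\<epsilon>>0. \<exists>K. \<forall>x\<in>tree_nodes m. \<forall>z\<in>branches m.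
        length x \<ge> K \<and> passes_through z x \<longrightarrow> \<bar>u x - f (psi m z)\<bar> < \<epsilon>)"

text \<open>The i-th term (i \<ge> 1) of the series defining S^beta_h(x).\<close>
definition S_term :: "nat \<Rightarrow> real \<Rightarrow> (nat list \<Rightarrow> real) \<Rightarrow> nat list \<Rightarrow> nat \<Rightarrow> real" where
  "S_term m \<beta> h x i =
     (\<Sum>j<i. \<beta> ^ (i - j - 1) / (1 - \<beta>) ^ (i - j) * (1 / real m ^ j) * (\<Sum>y\<in>succs m j x. h y))"

definition S_conv :: "nat \<Rightarrow> real \<Rightarrow> (nat list \<Rightarrow> real) \<Rightarrow> nat list \<Rightarrow> bool" where
  "S_conv m \<beta> h x \<longleftrightarrow> summable (\<lambda>n. S_term m \<beta> h x (Suc n))"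

definition S_beta :: "nat \<Rightarrow> real \<Rightarrow> (nat list \<Rightarrow> real) \<Rightarrow> nat list \<Rightarrow> real" where
  "S_beta m \<beta> h x = (\<Sum>n. S_term m \<beta> h x (Suc n))"

end

theory Submission
  imports Defs
begin


definition words :: "nat \<Rightarrow> nat \<Rightarrow> nat list set" where
  "words m l = {w. length w = l \<and> (\<forall>a\<in>set w. a < m)}"

lemma succs_words: "succs m l x = (\<lambda>w. x @ w) ` words m l"
  unfolding succs_def words_def by auto

lemma words_finite: "finite (words m l)"
proof -
  have "words m l \<subseteq> {xs. set xs \<subseteq> {..<m} \<and> length xs \<le> l}"
    unfolding words_def by auto
  moreover have "finite {xs. set xs \<subseteq> {..<m} \<and> length xs \<le> l}"
    by (rule finite_lists_length_le) auto
  ultimately show ?thesis by (rule finite_subset)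
qed

lemma words_Suc: "words m (Suc l) = (\<lambda>(w,a). w @ [a]) ` (words m l \<times> {..<m})"
proof (rule set_eqI)
  fix v
  show "v \<in> words m (Suc l) \<longleftrightarrow> v \<in> (\<lambda>(w,a). w @ [a]) ` (words m l \<times> {..<m})"
  proof
    assume "v \<in> words m (Suc l)"
    then have "v \<noteq> []" and "length v = Suc l" and "\<forall>a\<in>set v. a < m" unfolding words_def by auto
    then have "v = butlast v @ [last v]" by simp
    moreover have "butlast v \<in> words m l" using \<open>length v = Suc l\<close> \<open>\<forall>a\<in>set v. a < m\<close>
      unfolding words_def by (auto dest: in_set_butlastD)
    moreover have "last v < m" using \<open>v \<noteq> []\<close> \<open>\<forall>a\<in>set v. a < m\<close> by auto
    ultimately show "v \<in> (\<lambda>(w,a). w @ [a]) ` (words m l \<times> {..<m})" by force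
  qed (auto simp: words_def)
qed

lemma words_Suc2: "words m (Suc l) = (\<lambda>(a,w). a # w) ` ({..<m} \<times> words m l)"
proof (rule set_eqI)
  fix v
  show "v \<in> words m (Suc l) \<longleftrightarrow> v \<in> (\<lambda>(a,w). a # w) ` ({..<m} \<times> words m l)"
  proof
    assume "v \<in> words m (Suc l)"
    then obtain a w where "v = a # w" "length w = l" "a < m" "\<forall>b\<in>set w. b < m"
      unfolding words_def by (cases v) auto
    then show "v \<in> (\<lambda>(a,w). a # w) ` ({..<m} \<times> words m l)" unfolding words_def by force
  qed (auto simp: words_def)
qed

lemma sum_words_Suc:
  "(\<Sum>w\<in>words m (Suc l). g w) = (\<Sum>w\<in>words m l. \<Sum>a<m. g (w @ [a]))"
proof -
  have inj: "inj_on (\<lambda>(w,a). w @ [a]) (words m l \<times> {..<m})"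
    by (auto simp: inj_on_def)
  have "(\<Sum>w\<in>words m (Suc l). g w) = (\<Sum>p\<in>words m l \<times> {..<m}. g ((\<lambda>(w,a). w @ [a]) p))"
    unfolding words_Suc by (rule sum.reindex[OF inj, unfolded comp_def])
  also have "\<dots> = (\<Sum>w\<in>words m l. \<Sum>a<m. g (w @ [a]))"
    by (subst sum.cartesian_product) (rule sum.cong, auto)
  finally show ?thesis .
qed

lemma sum_words_Suc2:
  "(\<Sum>w\<in>words m (Suc l). g w) = (\<Sum>a<m. \<Sum>w\<in>words m l. g (a # w))"
proof -
  have inj: "inj_on (\<lambda>(a,w). a # w) ({..<m} \<times> words m l)"
    by (auto simp: inj_on_def)
  have "(\<Sum>w\<in>words m (Suc l). g w) = (\<Sum>p\<in>{..<m} \<times> words m l. g ((\<lambda>(a,w). a # w) p))"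
    unfolding words_Suc2 by (rule sum.reindex[OF inj, unfolded comp_def])
  also have "\<dots> = (\<Sum>a<m. \<Sum>w\<in>words m l. g (a # w))"
    by (subst sum.cartesian_product) (rule sum.cong, auto)
  finally show ?thesis .
qed

lemma card_words: "card (words m l) = m ^ l"
proof (induction l)
  case 0
  have "words m 0 = {[]}" unfolding words_def by auto
  then show ?case by simp
next
  case (Suc l)
  have "card (words m (Suc l)) = (\<Sum>w\<in>words m (Suc l). 1)" by simp
  also have "\<dots> = (\<Sum>w\<in>words m l. \<Sum>a<m. (1::nat))" by (rule sum_words_Suc)
  also have "\<dots> = m ^ Suc l" using Suc by simp
  finally show ?case .
qed

lemma sum_succs: "(\<Sum>y\<in>succs m l x. g y) = (\<Sum>w\<in>words m l. g (x @ w))"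
  unfolding succs_words by (subst sum.reindex) (auto simp: inj_on_def)

definition avgS :: "nat \<Rightarrow> nat \<Rightarrow> (nat list \<Rightarrow> real) \<Rightarrow> nat list \<Rightarrow> real" where
  "avgS m j g x = 1 / real m ^ j * (\<Sum>y\<in>succs m j x. g y)"

lemma avgS_words: "avgS m j g x = 1 / real m ^ j * (\<Sum>w\<in>words m j. g (x @ w))"
  unfolding avgS_def sum_succs ..

lemma avgS_0[simp]: "avgS m 0 g x = g x"
proof -
  have "words m 0 = {[]}" unfolding words_def by auto
  then show ?thesis unfolding avgS_words by simp
qed

lemma avgS_Suc: "m > 0 \<Longrightarrow> avgS m (Suc j) g x = avgS m j (\<lambda>y. (\<Sum>a<m. g (y @ [a])) / real m) x"
  unfolding avgS_words sum_words_Suc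
  by (simp add: sum_divide_distrib[symmetric] field_simps)

lemma avgS_Suc2: "m > 0 \<Longrightarrow> avgS m (Suc j) g x = (\<Sum>a<m. avgS m j g (x @ [a])) / real m"
  unfolding avgS_words sum_words_Suc2
  by (simp add: sum_distrib_left[symmetric] sum_divide_distrib[symmetric] field_simps)

lemma avgS_add: "avgS m j (\<lambda>y. f y + g y) x = avgS m j f x + avgS m j g x"
  unfolding avgS_def by (simp add: sum.distrib algebra_simps)

lemma avgS_diff: "avgS m j (\<lambda>y. f y - g y) x = avgS m j f x - avgS m j g x"
  unfolding avgS_def by (simp add: sum_subtractf algebra_simps)

lemma avgS_cmult: "avgS m j (\<lambda>y. c * f y) x = c * avgS m j f x"
  unfolding avgS_def by (simp add: sum_distrib_left[symmetric] algebra_simps)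

lemma avgS_const: "m > 0 \<Longrightarrow> avgS m j (\<lambda>y. c) x = c"
  unfolding avgS_words by (simp add: card_words)

lemma avgS_cong: "(\<And>y. y \<in> succs m j x \<Longrightarrow> f y = g y) \<Longrightarrow> avgS m j f x = avgS m j g x"
  unfolding avgS_def by simp

lemma avgS_bound: "m > 0 \<Longrightarrow> (\<And>y. y \<in> succs m j x \<Longrightarrow> \<bar>f y\<bar> \<le> B) \<Longrightarrow> \<bar>avgS m j f x\<bar> \<le> B"
proof -
  assume m: "m > 0" and b: "\<And>y. y \<in> succs m j x \<Longrightarrow> \<bar>f y\<bar> \<le> B"
  have "\<bar>\<Sum>y\<in>succs m j x. f y\<bar> \<le> (\<Sum>y\<in>succs m j x. \<bar>f y\<bar>)" by (rule sum_abs)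
  also have "\<dots> \<le> (\<Sum>y\<in>succs m j x. B)" by (rule sum_mono) (rule b)
  also have "\<dots> = real (card (succs m j x)) * B" by simp
  also have "card (succs m j x) = m ^ j" unfolding succs_words
    by (subst card_image) (auto simp: inj_on_def card_words)
  finally show ?thesis using m unfolding avgS_def
    by (simp add: abs_mult field_simps)
qed

lemma succs_mem: "y \<in> succs m j x \<Longrightarrow> length y = length x + j \<and> take (length x) y = x \<and>
   (x \<in> tree_nodes m \<longrightarrow> y \<in> tree_nodes m)"
  unfolding succs_def tree_nodes_def by auto

lemma avgS_comp: "m > 0 \<Longrightarrow> avgS m (j + l) g x = avgS m j (avgS m l g) x"
proof (induction l arbitrary: g)
  case 0 then show ?case by simp
next
  case (Suc l)
  have "avgS m (j + Suc l) g x = avgS m (j + l) (\<lambda>y. (\<Sum>a<m. g (y @ [a])) / real m) x"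
    using Suc.prems by (simp add: avgS_Suc)
  also have "\<dots> = avgS m j (avgS m l (\<lambda>y. (\<Sum>a<m. g (y @ [a])) / real m)) x"
    using Suc by simp
  also have "avgS m l (\<lambda>y. (\<Sum>a<m. g (y @ [a])) / real m) = avgS m (Suc l) g"
    using Suc.prems by (intro ext) (simp add: avgS_Suc)
  finally show ?case .
qed



lemma eq_div_helper: "(c::real) \<noteq> 0 \<Longrightarrow> c * a = b \<Longrightarrow> a = b / c" by (simp add: field_simps)

lemma alg1: "(a::real) + r * (s + r ^ Suc i * e) = (a + r * s) + r ^ Suc (Suc i) * e"
  by (simp add: algebra_simps)

lemma alg2: assumes "(h::real) = u - A" shows "u - \<beta> * (u - h) - (1 - \<beta>) * A = h"
  unfolding assms by (simp add: algebra_simps)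

lemma S_term_avg: "S_term m \<beta> h x i = (\<Sum>j<i. \<beta> ^ (i - j - 1) / (1 - \<beta>) ^ (i - j) * avgS m j h x)"
  unfolding S_term_def avgS_def by (simp add: mult.assoc)

lemma S_term_0[simp]: "S_term m \<beta> h x 0 = 0"
  unfolding S_term_def by simp

lemma S_term_1: "S_term m \<beta> h x (Suc 0) = h x / (1 - \<beta>)"
  unfolding S_term_avg by simp

lemma S_term_SS:
  assumes "\<beta> < 1"
  shows "S_term m \<beta> h x (Suc (Suc i)) = avgS m (Suc i) h x / (1 - \<beta>) + \<beta> / (1 - \<beta>) * S_term m \<beta> h x (Suc i)"
proof -
  have ne: "1 - \<beta> \<noteq> 0" using assms by simp
  have "S_term m \<beta> h x (Suc (Suc i)) = (\<Sum>j<Suc i. \<beta> ^ (Suc (Suc i) - j - 1) / (1 - \<beta>) ^ (Suc (Suc i) - j) * avgS m j h x)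
        + avgS m (Suc i) h x / (1 - \<beta>)"
    unfolding S_term_avg by simp
  also have "(\<Sum>j<Suc i. \<beta> ^ (Suc (Suc i) - j - 1) / (1 - \<beta>) ^ (Suc (Suc i) - j) * avgS m j h x)
      = (\<Sum>j<Suc i. \<beta> / (1 - \<beta>) * (\<beta> ^ (Suc i - j - 1) / (1 - \<beta>) ^ (Suc i - j) * avgS m j h x))"
  proof (rule sum.cong)
    fix j assume "j \<in> {..<Suc i}"
    then have j: "j \<le> i" by simp
    have e1: "Suc (Suc i) - j - 1 = Suc (i - j)" "Suc (Suc i) - j = Suc (Suc (i - j))"
      "Suc i - j - 1 = i - j" "Suc i - j = Suc (i - j)" using j by auto
    show "\<beta> ^ (Suc (Suc i) - j - 1) / (1 - \<beta>) ^ (Suc (Suc i) - j) * avgS m j h x =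
          \<beta> / (1 - \<beta>) * (\<beta> ^ (Suc i - j - 1) / (1 - \<beta>) ^ (Suc i - j) * avgS m j h x)"
      unfolding e1 using ne by (simp add: power_Suc)
  qed simp
  also have "\<dots> = \<beta> / (1 - \<beta>) * S_term m \<beta> h x (Suc i)"
    by (simp only: S_term_avg sum_distrib_left)
  finally show ?thesis by simp
qed

definition prevv :: "(nat list \<Rightarrow> real) \<Rightarrow> (nat list \<Rightarrow> real) \<Rightarrow> nat list \<Rightarrow> real" where
  "prevv u h x = (if x = [] then u [] - h [] else u (butlast x))"

lemma AE0:
  assumes m: "m > 0" and x: "x \<in> tree_nodes m" and L: "\<forall>y\<in>tree_nodes m. avg_op m \<beta> u y = h y"
  shows "u x - \<beta> * prevv u h x - (1 - \<beta>) * avgS m (Suc 0) u x = h x"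
proof -
  have a1: "avgS m (Suc 0) u x = (\<Sum>a<m. u (x @ [a])) / real m"
    using m by (simp add: avgS_Suc)
  have e: "avg_op m \<beta> u x = h x" using L x by auto
  show ?thesis
  proof (cases "x = []")
    case True
    then have hx: "h [] = u [] - (\<Sum>a<m. u [a]) / real m" using e unfolding avg_op_def by simp
    have "u [] - \<beta> * (u [] - h []) - (1 - \<beta>) * ((\<Sum>a<m. u [a]) / real m) = h []"
      by (rule alg2[OF hx])
    then show ?thesis unfolding a1 prevv_def using True by simp
  next
    case False
    then show ?thesis using e unfolding a1 prevv_def avg_op_def by simp
  qed
qed

lemma AES:
  assumes m: "m > 0" and x: "x \<in> tree_nodes m" and L: "\<forall>y\<in>tree_nodes m. avg_op m \<beta> u y = h y"
  shows "avgS m (Suc j) u x - \<beta> * avgS m j u x - (1 - \<beta>) * avgS m (Suc (Suc j)) u x = avgS m (Suc j) h x"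
proof -
  have "avgS m (Suc j) h x = avgS m (Suc j) (\<lambda>y. u y - \<beta> * u (butlast y) - (1 - \<beta>) * ((\<Sum>a<m. u (y @ [a])) / real m)) x"
  proof (rule avgS_cong)
    fix y assume y: "y \<in> succs m (Suc j) x"
    then have "y \<in> tree_nodes m" "y \<noteq> []" using succs_mem[OF y] x by auto
    then show "h y = u y - \<beta> * u (butlast y) - (1 - \<beta>) * ((\<Sum>a<m. u (y @ [a])) / real m)"
      using L unfolding avg_op_def by auto
  qed
  also have "\<dots> = avgS m (Suc j) u x - \<beta> * avgS m (Suc j) (\<lambda>y. u (butlast y)) x
      - (1 - \<beta>) * avgS m (Suc j) (\<lambda>y. (\<Sum>a<m. u (y @ [a])) / real m) x"
    by (simp only: avgS_diff avgS_cmult)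
  also have "avgS m (Suc j) (\<lambda>y. u (butlast y)) x = avgS m j u x"
    using m by (simp add: avgS_Suc)
  also have "avgS m (Suc j) (\<lambda>y. (\<Sum>a<m. u (y @ [a])) / real m) x = avgS m (Suc (Suc j)) u x"
    using m by (simp add: avgS_Suc)
  finally show ?thesis by simp
qed

lemma Dlemma:
  assumes m: "m > 0" and x: "x \<in> tree_nodes m" and L: "\<forall>y\<in>tree_nodes m. avg_op m \<beta> u y = h y"
    and b: "\<beta> < 1"
  shows "avgS m i u x - avgS m (Suc i) u x = S_term m \<beta> h x (Suc i) + (\<beta> / (1 - \<beta>)) ^ Suc i * (prevv u h x - u x)"
proof (induction i)
  case 0
  have ne: "1 - \<beta> \<noteq> 0" using b by simp
  from AE0[OF m x L] have hx: "h x = u x - \<beta> * prevv u h x - (1 - \<beta>) * avgS m (Suc 0) u x" by simp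
  have "(1 - \<beta>) * (u x - avgS m (Suc 0) u x) = h x + \<beta> * (prevv u h x - u x)"
    by (simp add: hx algebra_simps)
  then have "u x - avgS m (Suc 0) u x = (h x + \<beta> * (prevv u h x - u x)) / (1 - \<beta>)"
    by (rule eq_div_helper[OF ne])
  then show ?case unfolding S_term_1 using ne
    by (simp add: add_divide_distrib)
next
  case (Suc i)
  have ne: "1 - \<beta> \<noteq> 0" using b by simp
  from AES[OF m x L, of i] have e: "avgS m (Suc i) u x - \<beta> * avgS m i u x - (1 - \<beta>) * avgS m (Suc (Suc i)) u x = avgS m (Suc i) h x" .
  have hx: "avgS m (Suc i) h x = avgS m (Suc i) u x - \<beta> * avgS m i u x - (1 - \<beta>) * avgS m (Suc (Suc i)) u x"
    using e by simp
  have "(1 - \<beta>) * (avgS m (Suc i) u x - avgS m (Suc (Suc i)) u x) = avgS m (Suc i) h x + \<beta> * (avgS m i u x - avgS m (Suc i) u x)"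
    by (simp add: hx algebra_simps)
  then have "avgS m (Suc i) u x - avgS m (Suc (Suc i)) u x = (avgS m (Suc i) h x + \<beta> * (avgS m i u x - avgS m (Suc i) u x)) / (1 - \<beta>)"
    by (rule eq_div_helper[OF ne])
  also have "\<dots> = avgS m (Suc i) h x / (1 - \<beta>) + \<beta> / (1 - \<beta>) * (avgS m i u x - avgS m (Suc i) u x)"
    by (simp add: add_divide_distrib)
  also have "\<dots> = S_term m \<beta> h x (Suc (Suc i)) + (\<beta> / (1 - \<beta>)) ^ Suc (Suc i) * (prevv u h x - u x)"
    unfolding Suc S_term_SS[OF b] by (rule alg1)
  finally show ?case .
qed



definition ext :: "nat list \<Rightarrow> nat \<Rightarrow> nat" where
  "ext w = (\<lambda>i. if i < length w then w ! i else 0)"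

lemma ext_branch: "m > 0 \<Longrightarrow> x \<in> tree_nodes m \<Longrightarrow> ext x \<in> branches m"
  unfolding ext_def branches_def tree_nodes_def by (auto simp: nth_mem)

lemma ext_passes: "passes_through (ext x) x"
  unfolding passes_through_def by (rule nth_equalityI) (auto simp: ext_def)

lemma r_facts: assumes "0 \<le> (\<beta>::real)" "\<beta> < 1/2" shows "0 \<le> \<beta>/(1-\<beta>)" "\<beta>/(1-\<beta>) < 1"
proof -
  have "1 - \<beta> > 0" using assms by simp
  then show "0 \<le> \<beta>/(1-\<beta>)" using assms by simp
  show "\<beta>/(1-\<beta>) < 1" using \<open>1 - \<beta> > 0\<close> assms by (simp add: divide_less_eq)
qed

lemma bd_tozero:
  assumes m: "m > 0" and b: "boundary_eq m u (\<lambda>_. 0)" and x: "x \<in> tree_nodes m"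
  shows "(\<lambda>n. avgS m n u x) \<longlonglongrightarrow> 0"
proof (rule LIMSEQ_I)
  fix r :: real assume r: "r > 0"
  have r2: "r / 2 > 0" using r by simp
  obtain K where K: "\<forall>y\<in>tree_nodes m. \<forall>z\<in>branches m. length y \<ge> K \<and> passes_through z y
      \<longrightarrow> \<bar>u y - 0\<bar> < r / 2"
    using b[unfolded boundary_eq_def, rule_format, OF r2] by blast
  show "\<exists>no. \<forall>n\<ge>no. norm (avgS m n u x - 0) < r"
  proof (intro exI allI impI)
    fix n assume n: "n \<ge> K"
    have "\<bar>avgS m n u x\<bar> \<le> r / 2"
    proof (rule avgS_bound[OF m])
      fix y assume y: "y \<in> succs m n x"
      with succs_mem[OF y] x have "y \<in> tree_nodes m" "length y \<ge> K" using n by auto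
      then show "\<bar>u y\<bar> \<le> r / 2" using K ext_branch[OF m] ext_passes by fastforce
    qed
    then show "norm (avgS m n u x - 0) < r" using r by simp
  qed
qed

lemma lemmaG:
  assumes m: "m > 0" and b0: "0 \<le> \<beta>" and b: "\<beta> < 1/2"
    and L: "\<forall>y\<in>tree_nodes m. avg_op m \<beta> u y = h y"
    and tz: "(\<lambda>n. avgS m n u x) \<longlonglongrightarrow> 0" and x: "x \<in> tree_nodes m"
  shows "S_conv m \<beta> h x \<and> (1 - \<beta> / (1 - \<beta>)) * S_beta m \<beta> h x = u x - \<beta> / (1 - \<beta>) * prevv u h x"
proof -
  define r where "r = \<beta> / (1 - \<beta>)"
  define e where "e = prevv u h x - u x"
  have r0: "0 \<le> r" and r1: "r < 1" using r_facts[OF b0 b] unfolding r_def by auto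
  have D: "S_term m \<beta> h x (Suc i) = (avgS m i u x - avgS m (Suc i) u x) - r ^ Suc i * e" for i
    using Dlemma[OF m x L, of i] b unfolding r_def e_def by linarith
  have t: "(\<lambda>i. avgS m i u x - avgS m (Suc i) u x) sums (u x - 0)"
    using telescope_sums'[OF tz] by simp
  have eqg: "(\<lambda>i. r ^ Suc i * e) = (\<lambda>i. (r * e) * r ^ i)" by (simp add: fun_eq_iff)
  have g: "(\<lambda>i. r ^ Suc i * e) sums ((r * e) * (1 / (1 - r)))"
    unfolding eqg by (rule sums_mult, rule geometric_sums) (use r0 r1 in simp)
  have s: "(\<lambda>i. S_term m \<beta> h x (Suc i)) sums (u x - (r * e) * (1 / (1 - r)))"
    unfolding D using sums_diff[OF t g] by simp
  then have conv: "S_conv m \<beta> h x" unfolding S_conv_def by (rule sums_summable)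
  have "S_beta m \<beta> h x = u x - (r * e) * (1 / (1 - r))"
    unfolding S_beta_def using s by (rule sums_unique[symmetric])
  then have "(1 - r) * S_beta m \<beta> h x = u x - r * prevv u h x"
    using r1 unfolding e_def by (simp add: field_simps)
  then show ?thesis using conv unfolding r_def by simp
qed

lemma avg_op_diff: "avg_op m \<beta> (\<lambda>x. v x - u x) y = avg_op m \<beta> v y - avg_op m \<beta> u y"
  unfolding avg_op_def by (simp add: sum_subtractf algebra_simps)

lemma boundary_diff:
  assumes "boundary_eq m u f" "boundary_eq m v g"
  shows "boundary_eq m (\<lambda>x. u x - v x) (\<lambda>t. f t - g t)"
  unfolding boundary_eq_def
proof (intro allI impI)
  fix e :: real assume e: "e > 0"
  have e2: "e / 2 > 0" using e by simp
  obtain K1 where K1: "\<forall>x\<in>tree_nodes m. \<forall>z\<in>branches m. length x \<ge> K1 \<and> passes_through z x \<longrightarrow> \<bar>u x - f (psi m z)\<bar> < e/2"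
    using assms(1)[unfolded boundary_eq_def, rule_format, OF e2] by blast
  obtain K2 where K2: "\<forall>x\<in>tree_nodes m. \<forall>z\<in>branches m. length x \<ge> K2 \<and> passes_through z x \<longrightarrow> \<bar>v x - g (psi m z)\<bar> < e/2"
    using assms(2)[unfolded boundary_eq_def, rule_format, OF e2] by blast
  show "\<exists>K. \<forall>x\<in>tree_nodes m. \<forall>z\<in>branches m. K \<le> length x \<and> passes_through z x \<longrightarrow>
      \<bar>u x - v x - (f (psi m z) - g (psi m z))\<bar> < e"
  proof (intro exI[of _ "max K1 K2"] ballI impI)
    fix x z assume x: "x \<in> tree_nodes m" and z: "z \<in> branches m" and c: "max K1 K2 \<le> length x \<and> passes_through z x"
    have "\<bar>u x - f (psi m z)\<bar> < e/2" using K1 x z c by auto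
    moreover have "\<bar>v x - g (psi m z)\<bar> < e/2" using K2 x z c by auto
    ultimately show "\<bar>u x - v x - (f (psi m z) - g (psi m z))\<bar> < e" by linarith
  qed
qed

lemma tree_snoc: "xs @ [a] \<in> tree_nodes m \<longleftrightarrow> xs \<in> tree_nodes m \<and> a < m"
  unfolding tree_nodes_def by auto

lemma uniq0:
  assumes m: "m > 0" and b0: "0 \<le> \<beta>" and b: "\<beta> < 1/2"
    and L: "\<forall>y\<in>tree_nodes m. avg_op m \<beta> w y = 0"
    and bd: "boundary_eq m w (\<lambda>_. 0)"
  shows "\<forall>x\<in>tree_nodes m. w x = 0"
proof -
  define r where "r = \<beta> / (1 - \<beta>)"
  have r0: "0 \<le> r" and r1: "r < 1" using r_facts[OF b0 b] unfolding r_def by auto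
  have L': "\<forall>y\<in>tree_nodes m. avg_op m \<beta> w y = (\<lambda>_. 0) y" using L by simp
  have Sz: "S_beta m \<beta> (\<lambda>_. 0) x = 0" for x
    unfolding S_beta_def S_term_def by simp
  have key: "w x = r * prevv w (\<lambda>_. 0) x" if x: "x \<in> tree_nodes m" for x
    using lemmaG[OF m b0 b L' bd_tozero[OF m bd x] x] unfolding Sz r_def by simp
  have w0: "w [] = 0"
  proof -
    have "[] \<in> tree_nodes m" unfolding tree_nodes_def by simp
    from key[OF this] have "w [] = r * w []" unfolding prevv_def by simp
    then have "(1 - r) * w [] = 0" by (simp add: algebra_simps)
    then show ?thesis using r1 by simp
  qed
  show ?thesis
  proof
    fix x assume "x \<in> tree_nodes m"
    then show "w x = 0"
    proof (induction x rule: rev_induct)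
      case Nil show ?case using w0 by simp
    next
      case (snoc a xs)
      then have "xs \<in> tree_nodes m" by (simp add: tree_snoc)
      with snoc have "w xs = 0" by simp
      then show ?case using key[OF snoc.prems] unfolding prevv_def by simp
    qed
  qed
qed



lemma geo_m: assumes m: "m \<ge> 2" shows "(\<lambda>i. (real m - 1) / real m ^ Suc i) sums 1"
proof -
  have m0: "real m > 1" using m by simp
  have n: "norm (1 / real m) < 1" using m0 by simp
  have s: "(\<lambda>i. (real m - 1) / real m * (1 / real m) ^ i) sums ((real m - 1) / real m * (1 / (1 - 1 / real m)))"
    by (rule sums_mult[OF geometric_sums[OF n]])
  have e1: "(\<lambda>i. (real m - 1) / real m * (1 / real m) ^ i) = (\<lambda>i. (real m - 1) / real m ^ Suc i)"
    by (simp add: fun_eq_iff power_one_over)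
  have e2: "(real m - 1) / real m * (1 / (1 - 1 / real m)) = 1"
    using m0 by (simp add: field_simps)
  show ?thesis using s unfolding e1 e2 .
qed

lemma psi_terms:
  assumes m: "m \<ge> 2" and z: "z \<in> branches m"
  shows "0 \<le> real (z i) / real m ^ Suc i" "real (z i) / real m ^ Suc i \<le> (real m - 1) / real m ^ Suc i"
proof -
  have "z i < m" using z unfolding branches_def by auto
  then have "real (z i) \<le> real m - 1" by linarith
  then show "real (z i) / real m ^ Suc i \<le> (real m - 1) / real m ^ Suc i"
    using m by (intro divide_right_mono) auto
qed simp

lemma psi_summable: assumes m: "m \<ge> 2" and z: "z \<in> branches m"
  shows "summable (\<lambda>i. real (z i) / real m ^ Suc i)"
  by (rule summable_comparison_test'[OF sums_summable[OF geo_m[OF m]], of 0])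
     (use psi_terms[OF m z] in simp)

lemma psi_01: assumes m: "m \<ge> 2" and z: "z \<in> branches m"
  shows "0 \<le> psi m z" "psi m z \<le> 1"
proof -
  show "0 \<le> psi m z" unfolding psi_def
    by (rule suminf_nonneg[OF psi_summable[OF m z]]) (rule psi_terms(1)[OF m z])
  have "psi m z \<le> (\<Sum>i. (real m - 1) / real m ^ Suc i)" unfolding psi_def
    by (rule suminf_le[OF _ psi_summable[OF m z] sums_summable[OF geo_m[OF m]]]) (rule psi_terms(2)[OF m z])
  also have "\<dots> = 1" using sums_unique[OF geo_m[OF m]] by simp
  finally show "psi m z \<le> 1" .
qed

lemma psi_close:
  assumes m: "m \<ge> 2" and z: "z \<in> branches m" and z': "z' \<in> branches m"
    and agree: "\<forall>i<n. z i = z' i"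
  shows "\<bar>psi m z - psi m z'\<bar> \<le> 1 / real m ^ n"
proof -
  define d where "d i = real (z i) / real m ^ Suc i - real (z' i) / real m ^ Suc i" for i
  define b where "b i = (if i < n then 0 else (real m - 1) / real m ^ Suc i)" for i
  have sd: "(\<lambda>i. d i) sums (psi m z - psi m z')"
    unfolding d_def psi_def by (intro sums_diff summable_sums psi_summable m z z')
  have bshift: "(\<lambda>i. b (i + n)) = (\<lambda>i. 1 / real m ^ n * ((real m - 1) / real m ^ Suc i))"
    by (simp add: b_def fun_eq_iff power_add field_simps)
  have "(\<lambda>i. b (i + n)) sums (1 / real m ^ n * 1)"
    unfolding bshift by (rule sums_mult[OF geo_m[OF m]])
  then have sb: "b sums (1 / real m ^ n)"
    unfolding sums_iff_shift by (simp add: b_def)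
  have db: "\<bar>d i\<bar> \<le> b i" for i
  proof (cases "i < n")
    case True then show ?thesis using agree unfolding d_def b_def by simp
  next
    case False
    have "\<bar>d i\<bar> \<le> (real m - 1) / real m ^ Suc i"
      using psi_terms[OF m z, of i] psi_terms[OF m z', of i] unfolding d_def by linarith
    then show ?thesis using False unfolding b_def by simp
  qed
  have "psi m z - psi m z' \<le> 1 / real m ^ n"
    by (rule sums_le[OF _ sd sb]) (use db in \<open>simp add: abs_le_iff\<close>)
  moreover have "- (psi m z - psi m z') \<le> 1 / real m ^ n"
    by (rule sums_le[OF _ sums_minus[OF sd] sb]) (use db in \<open>simp add: abs_le_iff\<close>)
  ultimately show ?thesis by linarith
qed

lemma passes_take: "passes_through z x \<Longrightarrow> k \<le> length x \<Longrightarrow> passes_through z (take k x)"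
  unfolding passes_through_def by (metis length_map length_upt minus_nat.diff_0 take_map take_upt add_0 min_absorb1 length_take)

lemma passes_snoc: "passes_through z (x @ [a]) \<Longrightarrow> passes_through z x"
  using passes_take[of z "x @ [a]" "length x"] by simp

lemma boundary_incr:
  assumes m: "m > 0" and b: "boundary_eq m w f" and e: "e > 0"
  shows "\<exists>K. \<forall>y\<in>tree_nodes m. \<forall>a<m. length y \<ge> K \<longrightarrow> \<bar>w y - w (y @ [a])\<bar> < e"
proof -
  have e2: "e / 2 > 0" using e by simp
  obtain K where K: "\<forall>x\<in>tree_nodes m. \<forall>z\<in>branches m. K \<le> length x \<and> passes_through z x \<longrightarrow> \<bar>w x - f (psi m z)\<bar> < e / 2"
    using b[unfolded boundary_eq_def, rule_format, OF e2] by blast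
  show ?thesis
  proof (intro exI[of _ K] ballI allI impI)
    fix y a assume y: "y \<in> tree_nodes m" and a: "a < m" and l: "K \<le> length y"
    have ya: "y @ [a] \<in> tree_nodes m" using y a by (simp add: tree_snoc)
    define z where "z = ext (y @ [a])"
    have zb: "z \<in> branches m" unfolding z_def by (rule ext_branch[OF m ya])
    have p1: "passes_through z (y @ [a])" unfolding z_def by (rule ext_passes)
    have p2: "passes_through z y" by (rule passes_snoc[OF p1])
    have "\<bar>w y - f (psi m z)\<bar> < e / 2" using K y zb p2 l by blast
    moreover have "\<bar>w (y @ [a]) - f (psi m z)\<bar> < e / 2" using K ya zb p1 l by auto
    ultimately show "\<bar>w y - w (y @ [a])\<bar> < e" by linarith
  qed
qed



lemma alg3: assumes "1/2 \<le> (\<beta>::real)" "\<beta> \<le> 1" "(1 - \<beta>) * p = \<beta> * q" shows "\<bar>q\<bar> \<le> \<bar>p\<bar>"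
proof -
  have "\<beta> * \<bar>q\<bar> = (1 - \<beta>) * \<bar>p\<bar>" using assms
    by (metis abs_mult abs_of_nonneg diff_ge_0_iff_ge order_trans zero_le_divide_1_iff zero_le_numeral)
  also have "\<dots> \<le> \<beta> * \<bar>p\<bar>" using assms by (intro mult_right_mono) auto
  finally have "\<beta> * \<bar>q\<bar> \<le> \<beta> * \<bar>p\<bar>" .
  then show ?thesis using assms by (simp add: mult_le_cancel_left)
qed

lemma avg_fin_bound:
  assumes m: "m > 0" and b: "\<And>a. a < m \<Longrightarrow> \<bar>g a\<bar> \<le> B"
  shows "\<bar>(\<Sum>a<m. g a) / real m\<bar> \<le> B"
proof -
  have "\<bar>\<Sum>a<m. g a\<bar> \<le> (\<Sum>a<m. \<bar>g a\<bar>)" by (rule sum_abs)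
  also have "\<dots> \<le> (\<Sum>a<m. B)" by (rule sum_mono) (use b in simp)
  also have "\<dots> = real m * B" by simp
  finally show ?thesis using m by (simp add: divide_le_eq mult.commute)
qed

lemma diff_avg: "m > 0 \<Longrightarrow> c - (\<Sum>a<m. g a) / real m = (\<Sum>a<m. c - g a) / real m"
  by (simp add: sum_subtractf field_simps)

lemma lemmaH:
  assumes m: "m \<ge> 2" and b1: "1/2 \<le> \<beta>" and b2: "\<beta> \<le> 1"
    and L: "\<forall>y\<in>tree_nodes m. avg_op m \<beta> w y = 0"
    and inc: "\<forall>e>0. \<exists>K. \<forall>y\<in>tree_nodes m. \<forall>a<m. length y \<ge> K \<longrightarrow> \<bar>w y - w (y @ [a])\<bar> < e"
    and x: "x \<in> tree_nodes m" and xne: "x \<noteq> []"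
  shows "w x = w (butlast x)"
proof -
  have m0: "m > 0" using m by simp
  define a where "a j = avgS m j w x" for j
  define D where "D j = a j - a (Suc j)" for j
  define E where "E = w (butlast x) - w x"
  have L': "\<forall>y\<in>tree_nodes m. avg_op m \<beta> w y = (\<lambda>_. 0) y" using L by simp
  have z0: "avgS m j (\<lambda>_. 0) x = 0" for j unfolding avgS_def by simp
  have e0: "(1 - \<beta>) * D 0 = \<beta> * E"
  proof -
    have "w x - \<beta> * w (butlast x) - (1 - \<beta>) * a (Suc 0) = 0"
      using AE0[OF m0 x L'] xne unfolding prevv_def a_def by simp
    then show ?thesis unfolding D_def E_def a_def by (simp add: algebra_simps)
  qed
  have eS: "(1 - \<beta>) * D (Suc j) = \<beta> * D j" for j
  proof -
    have "a (Suc j) - \<beta> * a j - (1 - \<beta>) * a (Suc (Suc j)) = 0"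
      using AES[OF m0 x L', of j] z0 unfolding a_def by simp
    then show ?thesis unfolding D_def by (simp add: algebra_simps)
  qed
  have mono: "\<bar>E\<bar> \<le> \<bar>D j\<bar>" for j
  proof (induction j)
    case 0 show ?case using alg3[OF b1 b2 e0] .
  next
    case (Suc j) then show ?case using alg3[OF b1 b2 eS[of j]] by linarith
  qed
  have small: "\<bar>E\<bar> \<le> e" if e: "e > 0" for e
  proof -
    obtain K where K: "\<forall>y\<in>tree_nodes m. \<forall>a<m. length y \<ge> K \<longrightarrow> \<bar>w y - w (y @ [a])\<bar> < e"
      using inc e by blast
    have "D K = avgS m K (\<lambda>y. w y - (\<Sum>a<m. w (y @ [a])) / real m) x"
      unfolding D_def a_def by (simp add: avgS_diff avgS_Suc[OF m0])
    also have "\<bar>\<dots>\<bar> \<le> e"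
    proof (rule avgS_bound[OF m0])
      fix y assume y: "y \<in> succs m K x"
      then have yT: "y \<in> tree_nodes m" and yl: "length y \<ge> K" using succs_mem[OF y] x by auto
      show "\<bar>w y - (\<Sum>a<m. w (y @ [a])) / real m\<bar> \<le> e"
        unfolding diff_avg[OF m0]
        by (rule avg_fin_bound[OF m0]) (use K yT yl in \<open>auto intro: less_imp_le\<close>)
    qed
    finally show ?thesis using mono[of K] by linarith
  qed
  have "E = 0"
  proof (rule ccontr)
    assume "E \<noteq> 0"
    then have "\<bar>E\<bar> > 0" by simp
    from small[OF half_gt_zero[OF this]] show False using \<open>\<bar>E\<bar> > 0\<close> by linarith
  qed
  then show ?thesis unfolding E_def by simp
qed

lemma const_on_tree:
  assumes "\<forall>x\<in>tree_nodes m. x \<noteq> [] \<longrightarrow> w x = w (butlast x)"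
  shows "\<forall>x\<in>tree_nodes m. w x = w []"
proof
  fix x assume "x \<in> tree_nodes m"
  then show "w x = w []"
  proof (induction x rule: rev_induct)
    case Nil show ?case by simp
  next
    case (snoc a xs)
    then have "xs \<in> tree_nodes m" by (simp add: tree_snoc)
    with snoc have "w xs = w []" by simp
    then show ?case using assms snoc.prems by fastforce
  qed
qed

lemma psi_zero: "psi m (\<lambda>_. 0) = 0"
  unfolding psi_def by simp

lemma psi_e1: "psi m (\<lambda>i. if i = 0 then 1 else 0) = 1 / real m"
proof -
  have e: "(\<lambda>i. real (if i = 0 then 1 else 0) / real m ^ Suc i) = (\<lambda>i. if i = 0 then (\<lambda>_. 1 / real m) i else 0)"
    by (simp add: fun_eq_iff)
  show ?thesis unfolding psi_def e using sums_unique[OF sums_single[of 0 "\<lambda>_. 1 / real m"]] by simp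
qed

lemma map_passes: "passes_through z (map z [0..<K])"
  unfolding passes_through_def by simp

lemma map_tree: "z \<in> branches m \<Longrightarrow> map z [0..<K] \<in> tree_nodes m"
  unfolding branches_def tree_nodes_def by auto

lemma beta_small:
  assumes m: "m \<ge> 2" and b0: "0 \<le> \<beta>" and b2: "\<beta> \<le> 1"
    and L0: "\<forall>y\<in>tree_nodes m. avg_op m \<beta> u0 y = h y" and B0: "boundary_eq m u0 (\<lambda>_. 0)"
    and L1: "\<forall>y\<in>tree_nodes m. avg_op m \<beta> u1 y = h y" and B1: "boundary_eq m u1 (\<lambda>t. t)"
  shows "\<beta> < 1/2"
proof (rule ccontr)
  assume "\<not> \<beta> < 1/2"
  then have b1: "1/2 \<le> \<beta>" by simp
  have m0: "m > 0" using m by simp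
  define w where "w x = u1 x - u0 x" for x
  have Lw: "\<forall>y\<in>tree_nodes m. avg_op m \<beta> w y = 0"
    using L0 L1 unfolding w_def[abs_def] by (simp add: avg_op_diff)
  have Bw: "boundary_eq m w (\<lambda>t. t - 0)"
    unfolding w_def[abs_def] by (rule boundary_diff[OF B1 B0])
  have inc: "\<forall>e>0. \<exists>K. \<forall>y\<in>tree_nodes m. \<forall>a<m. length y \<ge> K \<longrightarrow> \<bar>w y - w (y @ [a])\<bar> < e"
    using boundary_incr[OF m0 Bw] by blast
  have "\<forall>x\<in>tree_nodes m. x \<noteq> [] \<longrightarrow> w x = w (butlast x)"
    using lemmaH[OF m b1 b2 Lw inc] by blast
  then have c: "\<forall>x\<in>tree_nodes m. w x = w []" by (rule const_on_tree)
  define e where "e = 1 / (2 * real m)"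
  have e: "e > 0" using m unfolding e_def by simp
  obtain K where K: "\<forall>x\<in>tree_nodes m. \<forall>z\<in>branches m. K \<le> length x \<and> passes_through z x \<longrightarrow> \<bar>w x - (psi m z - 0)\<bar> < e"
    using Bw[unfolded boundary_eq_def, rule_format, OF e] by blast
  define z1 where "z1 = (\<lambda>i::nat. 0::nat)"
  define z2 where "z2 = (\<lambda>i::nat. if i = 0 then 1 else (0::nat))"
  have z1b: "z1 \<in> branches m" unfolding z1_def branches_def using m by simp
  have z2b: "z2 \<in> branches m" unfolding z2_def branches_def using m by simp
  have "\<bar>w (map z1 [0..<K]) - (psi m z1 - 0)\<bar> < e"
    using K map_tree[OF z1b] z1b map_passes by auto
  then have h1: "\<bar>w [] - 0\<bar> < e" using c map_tree[OF z1b] unfolding z1_def psi_zero by simp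
  have "\<bar>w (map z2 [0..<K]) - (psi m z2 - 0)\<bar> < e"
    using K map_tree[OF z2b] z2b map_passes by auto
  then have h2: "\<bar>w [] - 1 / real m\<bar> < e" using c map_tree[OF z2b] unfolding z2_def psi_e1 by simp
  have "1 / real m = 2 * e" unfolding e_def by simp
  then show False using h1 h2 by linarith
qed



lemma level_finite: "finite {x \<in> tree_nodes m. length x = k}"
proof -
  have "{x \<in> tree_nodes m. length x = k} \<subseteq> {xs. set xs \<subseteq> {..<m} \<and> length xs \<le> k}"
    unfolding tree_nodes_def by auto
  moreover have "finite {xs. set xs \<subseteq> {..<m} \<and> length xs \<le> k}"
    by (rule finite_lists_length_le) auto
  ultimately show ?thesis by (rule finite_subset)
qed

lemma level_nonempty: "m > 0 \<Longrightarrow> {x \<in> tree_nodes m. length x = k} \<noteq> {}"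
proof -
  assume "m > 0"
  then have "replicate k 0 \<in> {x \<in> tree_nodes m. length x = k}" unfolding tree_nodes_def by auto
  then show ?thesis by blast
qed

lemma SUP_tendsto:
  fixes G :: "nat \<Rightarrow> nat list \<Rightarrow> real"
  assumes m: "m > 0"
    and H: "\<And>e. e > 0 \<Longrightarrow> \<exists>K. \<forall>k\<ge>K. \<forall>x\<in>tree_nodes m. length x = k \<longrightarrow> \<bar>G k x\<bar> \<le> e"
  shows "(\<lambda>k. SUP x\<in>{x \<in> tree_nodes m. length x = k}. \<bar>G k x\<bar>) \<longlonglongrightarrow> 0"
proof (rule LIMSEQ_I)
  fix r :: real assume r: "r > 0"
  obtain K where K: "\<forall>k\<ge>K. \<forall>x\<in>tree_nodes m. length x = k \<longrightarrow> \<bar>G k x\<bar> \<le> r / 2"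
    using H[OF half_gt_zero[OF r]] by blast
  show "\<exists>no. \<forall>n\<ge>no. norm ((SUP x\<in>{x \<in> tree_nodes m. length x = n}. \<bar>G n x\<bar>) - 0) < r"
  proof (intro exI allI impI)
    fix n assume n: "n \<ge> K"
    let ?A = "{x \<in> tree_nodes m. length x = n}"
    have ne: "?A \<noteq> {}" by (rule level_nonempty[OF m])
    have bdd: "bdd_above ((\<lambda>x. \<bar>G n x\<bar>) ` ?A)"
      by (rule bdd_above_finite) (simp add: level_finite)
    have up: "(SUP x\<in>?A. \<bar>G n x\<bar>) \<le> r / 2"
      by (rule cSUP_least[OF ne]) (use K n in auto)
    obtain x0 where x0: "x0 \<in> ?A" using ne by blast
    have lo: "0 \<le> (SUP x\<in>?A. \<bar>G n x\<bar>)"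
      by (rule cSUP_upper2[OF bdd x0]) simp
    show "norm ((SUP x\<in>?A. \<bar>G n x\<bar>) - 0) < r" using up lo r by simp
  qed
qed

lemma SUP_bound_from:
  fixes G :: "nat \<Rightarrow> nat list \<Rightarrow> real"
  assumes lim: "(\<lambda>k. SUP x\<in>{x \<in> tree_nodes m. length x = k}. \<bar>G k x\<bar>) \<longlonglongrightarrow> 0"
    and e: "e > 0"
  shows "\<exists>K. \<forall>k\<ge>K. \<forall>x\<in>tree_nodes m. length x = k \<longrightarrow> \<bar>G k x\<bar> < e"
proof -
  obtain K where K: "\<forall>k\<ge>K. norm ((SUP x\<in>{x \<in> tree_nodes m. length x = k}. \<bar>G k x\<bar>) - 0) < e"
    using LIMSEQ_D[OF lim e] by blast
  show ?thesis
  proof (intro exI allI impI ballI)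
    fix k x assume k: "k \<ge> K" and x: "x \<in> tree_nodes m" and l: "length x = k"
    let ?A = "{x \<in> tree_nodes m. length x = k}"
    have bdd: "bdd_above ((\<lambda>x. \<bar>G k x\<bar>) ` ?A)"
      by (rule bdd_above_finite) (simp add: level_finite)
    have "\<bar>G k x\<bar> \<le> (SUP x\<in>?A. \<bar>G k x\<bar>)" by (rule cSUP_upper) (use x l bdd in auto)
    also have "\<dots> < e"
    proof -
      have "\<bar>(SUP x\<in>?A. \<bar>G k x\<bar>)\<bar> < e" using K k by simp
      then show ?thesis by (simp add: abs_less_iff)
    qed
    finally show "\<bar>G k x\<bar> < e" .
  qed
qed

lemma telescope_r:
  fixes a :: "nat \<Rightarrow> real"
  shows "(\<Sum>j=1..k. r ^ (k - j) * (a j - r * a (j - 1))) = a k - r ^ k * a 0"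
proof (induction k)
  case 0 then show ?case by simp
next
  case (Suc k)
  have "(\<Sum>j=1..k. r ^ (Suc k - j) * (a j - r * a (j - 1))) = r * (\<Sum>j=1..k. r ^ (k - j) * (a j - r * a (j - 1)))"
    unfolding sum_distrib_left
  proof (rule sum.cong)
    fix j assume "j \<in> {1..k}"
    then have "Suc k - j = Suc (k - j)" by auto
    then show "r ^ (Suc k - j) * (a j - r * a (j - 1)) = r * (r ^ (k - j) * (a j - r * a (j - 1)))" by simp
  qed simp
  have "(\<Sum>j=1..Suc k. r ^ (Suc k - j) * (a j - r * a (j - 1)))
      = (\<Sum>j=1..k. r ^ (Suc k - j) * (a j - r * a (j - 1))) + (a (Suc k) - r * a k)" by simp
  also have "\<dots> = r * (a k - r ^ k * a 0) + (a (Suc k) - r * a k)" unfolding \<open>(\<Sum>j=1..k. r ^ (Suc k - j) * (a j - r * a (j - 1))) = _\<close> Suc ..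
  also have "\<dots> = a (Suc k) - r ^ Suc k * a 0" by (simp add: algebra_simps)
  finally show ?case .
qed

lemma nec_cond:
  assumes m: "m \<ge> 2" and b0: "0 \<le> \<beta>" and b: "\<beta> < 1/2"
    and L: "\<forall>y\<in>tree_nodes m. avg_op m \<beta> u y = h y" and B: "boundary_eq m u (\<lambda>_. 0)"
  shows "\<forall>x\<in>tree_nodes m. S_conv m \<beta> h x"
    and "(\<lambda>k. SUP x\<in>{x\<in>tree_nodes m. length x = k}.
                 \<bar>\<Sum>j=1..k. (\<beta> / (1 - \<beta>)) ^ (k - j) * S_beta m \<beta> h (take j x)\<bar>) \<longlonglongrightarrow> 0"
proof -
  have m0: "m > 0" using m by simp
  define r where "r = \<beta> / (1 - \<beta>)"
  have r0: "0 \<le> r" and r1: "r < 1" using r_facts[OF b0 b] unfolding r_def by auto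
  have G: "S_conv m \<beta> h x \<and> (1 - r) * S_beta m \<beta> h x = u x - r * prevv u h x" if x: "x \<in> tree_nodes m" for x
    using lemmaG[OF m0 b0 b L bd_tozero[OF m0 B x] x] unfolding r_def .
  show "\<forall>x\<in>tree_nodes m. S_conv m \<beta> h x" using G by blast
  have tk: "take j x \<in> tree_nodes m" if "x \<in> tree_nodes m" for x j
    using that unfolding tree_nodes_def by (auto dest: in_set_takeD)
  have sum_eq: "(\<Sum>j=1..length x. r ^ (length x - j) * S_beta m \<beta> h (take j x)) = (u x - r ^ length x * u []) / (1 - r)"
    if x: "x \<in> tree_nodes m" for x
  proof -
    have "(\<Sum>j=1..length x. r ^ (length x - j) * S_beta m \<beta> h (take j x))
        = (\<Sum>j=1..length x. r ^ (length x - j) * (u (take j x) - r * u (take (j - 1) x))) / (1 - r)"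
      unfolding sum_divide_distrib
    proof (rule sum.cong)
      fix j assume j: "j \<in> {1..length x}"
      then have ne: "take j x \<noteq> []" by auto
      have bt: "butlast (take j x) = take (j - 1) x" using j by (simp add: butlast_take)
      have "(1 - r) * S_beta m \<beta> h (take j x) = u (take j x) - r * u (take (j - 1) x)"
        using G[OF tk[OF x]] ne bt unfolding prevv_def by simp
      then have "S_beta m \<beta> h (take j x) = (u (take j x) - r * u (take (j - 1) x)) / (1 - r)"
        using r1 by (simp add: eq_divide_eq mult.commute)
      then show "r ^ (length x - j) * S_beta m \<beta> h (take j x) = r ^ (length x - j) * (u (take j x) - r * u (take (j - 1) x)) / (1 - r)"
        by simp
    qed simp
    also have "\<dots> = (u x - r ^ length x * u []) / (1 - r)"
      using telescope_r[of r "length x" "\<lambda>j. u (take j x)"] by simp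
    finally show ?thesis .
  qed
  show "(\<lambda>k. SUP x\<in>{x\<in>tree_nodes m. length x = k}.
                 \<bar>\<Sum>j=1..k. (\<beta> / (1 - \<beta>)) ^ (k - j) * S_beta m \<beta> h (take j x)\<bar>) \<longlonglongrightarrow> 0"
    unfolding r_def[symmetric]
  proof (rule SUP_tendsto[OF m0])
    fix e :: real assume e: "e > 0"
    define d where "d = (1 - r) * e / 2"
    have d: "d > 0" unfolding d_def using e r1 by simp
    obtain K1 where K1: "\<forall>x\<in>tree_nodes m. \<forall>z\<in>branches m. K1 \<le> length x \<and> passes_through z x \<longrightarrow> \<bar>u x - 0\<bar> < d"
      using B[unfolded boundary_eq_def, rule_format, OF d] by blast
    have "(\<lambda>k. r ^ k * \<bar>u []\<bar>) \<longlonglongrightarrow> 0 * \<bar>u []\<bar>"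
      by (intro tendsto_mult_right LIMSEQ_power_zero) (use r0 r1 in simp)
    then obtain K2 where K2: "\<forall>k\<ge>K2. norm (r ^ k * \<bar>u []\<bar> - 0) < d"
      using LIMSEQ_D[OF _ d] by fastforce
    show "\<exists>K. \<forall>k\<ge>K. \<forall>x\<in>tree_nodes m. length x = k \<longrightarrow>
        \<bar>\<Sum>j = 1..k. r ^ (k - j) * S_beta m \<beta> h (take j x)\<bar> \<le> e"
    proof (intro exI[of _ "max K1 K2"] allI impI ballI)
      fix k x assume k: "max K1 K2 \<le> k" and x: "x \<in> tree_nodes m" and l: "length x = k"
      have ux: "\<bar>u x\<bar> < d" using K1 x ext_branch[OF m0 x] ext_passes k l by fastforce
      have rk: "r ^ k * \<bar>u []\<bar> < d" using K2 k r0 by simp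
      have ab: "\<bar>r ^ k * u []\<bar> = r ^ k * \<bar>u []\<bar>" using r0 by (simp add: abs_mult)
      have "\<bar>u x - r ^ k * u []\<bar> \<le> \<bar>u x\<bar> + r ^ k * \<bar>u []\<bar>"
        using abs_triangle_ineq4[of "u x" "r ^ k * u []"] unfolding ab .
      also have "\<dots> \<le> (1 - r) * e" using ux rk unfolding d_def by linarith
      finally have "\<bar>u x - r ^ k * u []\<bar> / (1 - r) \<le> e" using r1 by (simp add: divide_le_eq mult.commute)
      then show "\<bar>\<Sum>j = 1..k. r ^ (k - j) * S_beta m \<beta> h (take j x)\<bar> \<le> e"
        using sum_eq[OF x] l r1 by simp
    qed
  qed
qed



definition gF :: "nat \<Rightarrow> (real \<Rightarrow> real) \<Rightarrow> nat list \<Rightarrow> real" where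
  "gF m f w = f (psi m (ext w))"

definition FF :: "nat \<Rightarrow> (real \<Rightarrow> real) \<Rightarrow> nat list \<Rightarrow> real" where
  "FF m f y = lim (\<lambda>j. avgS m j (gF m f) y)"

lemma f_bounded:
  assumes "continuous_on {0..1} (f :: real \<Rightarrow> real)"
  shows "\<exists>M. \<forall>t\<in>{0..1}. \<bar>f t\<bar> \<le> M"
proof -
  have "compact (f ` {0..1})" by (rule compact_continuous_image[OF assms]) simp
  then have "bounded (f ` {0..1})" by (rule compact_imp_bounded)
  then show ?thesis unfolding bounded_real by auto
qed

lemma UCbr:
  assumes m: "m \<ge> 2" and fc: "continuous_on {0..1} (f :: real \<Rightarrow> real)" and e: "e > 0"
  shows "\<exists>N. \<forall>z\<in>branches m. \<forall>z'\<in>branches m. (\<forall>i<N. z i = z' i) \<longrightarrow> \<bar>f (psi m z) - f (psi m z')\<bar> < e"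
proof -
  have "uniformly_continuous_on {0..1} f" by (rule compact_uniformly_continuous[OF fc]) simp
  then obtain d where d: "d > 0" and dd: "\<forall>x\<in>{0..1}. \<forall>x'\<in>{0..1}. dist x' x < d \<longrightarrow> dist (f x') (f x) < e"
    unfolding uniformly_continuous_on_def using e by blast
  have "1 / real m < 1" using m by simp
  then obtain N where N: "(1 / real m) ^ N < d" using real_arch_pow_inv[OF d] by blast
  show ?thesis
  proof (intro exI[of _ N] ballI impI)
    fix z z' assume z: "z \<in> branches m" and z': "z' \<in> branches m" and ag: "\<forall>i<N. z i = z' i"
    have "\<bar>psi m z - psi m z'\<bar> \<le> 1 / real m ^ N" by (rule psi_close[OF m z z' ag])
    then have "dist (psi m z) (psi m z') < d" using N by (simp add: dist_real_def power_one_over)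
    then have "dist (f (psi m z)) (f (psi m z')) < e"
      using dd psi_01[OF m z] psi_01[OF m z'] by auto
    then show "\<bar>f (psi m z) - f (psi m z')\<bar> < e" by (simp add: dist_real_def)
  qed
qed

lemma ext_agree: "w \<in> succs m l y \<Longrightarrow> i < length y \<Longrightarrow> ext w i = ext y i"
  unfolding succs_def ext_def by (auto simp: nth_append)

lemma gF_near:
  assumes m: "m \<ge> 2" and fc: "continuous_on {0..1} f" and e: "e > 0"
  shows "\<exists>N. \<forall>y\<in>tree_nodes m. \<forall>l. length y \<ge> N \<longrightarrow> \<bar>avgS m l (gF m f) y - gF m f y\<bar> \<le> e"
proof -
  have m0: "m > 0" using m by simp
  obtain N where N: "\<forall>z\<in>branches m. \<forall>z'\<in>branches m. (\<forall>i<N. z i = z' i) \<longrightarrow> \<bar>f (psi m z) - f (psi m z')\<bar> < e"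
    using UCbr[OF m fc e] by blast
  show ?thesis
  proof (intro exI[of _ N] ballI allI impI)
    fix y l assume y: "y \<in> tree_nodes m" and l: "N \<le> length y"
    have "avgS m l (gF m f) y - gF m f y = avgS m l (\<lambda>w. gF m f w - gF m f y) y"
      by (simp add: avgS_diff avgS_const[OF m0])
    also have "\<bar>\<dots>\<bar> \<le> e"
    proof (rule avgS_bound[OF m0])
      fix w assume w: "w \<in> succs m l y"
      have wT: "w \<in> tree_nodes m" using succs_mem[OF w] y by auto
      have "\<forall>i<N. ext w i = ext y i" using ext_agree[OF w] l by auto
      then have "\<bar>f (psi m (ext w)) - f (psi m (ext y))\<bar> < e"
        using N ext_branch[OF m0 wT] ext_branch[OF m0 y] by blast
      then show "\<bar>gF m f w - gF m f y\<bar> \<le> e" unfolding gF_def by simp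
    qed
    finally show "\<bar>avgS m l (gF m f) y - gF m f y\<bar> \<le> e" .
  qed
qed

lemma cauchy_step:
  assumes m: "m \<ge> 2" and fc: "continuous_on {0..1} f" and e: "e > 0"
  shows "\<exists>N. \<forall>y\<in>tree_nodes m. \<forall>j l. length y + j \<ge> N \<longrightarrow>
     \<bar>avgS m (j + l) (gF m f) y - avgS m j (gF m f) y\<bar> \<le> e"
proof -
  have m0: "m > 0" using m by simp
  obtain N where N: "\<forall>y\<in>tree_nodes m. \<forall>l. length y \<ge> N \<longrightarrow> \<bar>avgS m l (gF m f) y - gF m f y\<bar> \<le> e"
    using gF_near[OF m fc e] by blast
  show ?thesis
  proof (intro exI[of _ N] ballI allI impI)
    fix y j l assume y: "y \<in> tree_nodes m" and l: "N \<le> length y + j"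
    have "avgS m (j + l) (gF m f) y - avgS m j (gF m f) y = avgS m j (\<lambda>w. avgS m l (gF m f) w - gF m f w) y"
      by (simp add: avgS_comp[OF m0] avgS_diff)
    also have "\<bar>\<dots>\<bar> \<le> e"
    proof (rule avgS_bound[OF m0])
      fix w assume w: "w \<in> succs m j y"
      have "w \<in> tree_nodes m" "length w = length y + j" using succs_mem[OF w] y by auto
      then show "\<bar>avgS m l (gF m f) w - gF m f w\<bar> \<le> e" using N l by auto
    qed
    finally show "\<bar>avgS m (j + l) (gF m f) y - avgS m j (gF m f) y\<bar> \<le> e" .
  qed
qed

lemma FF_lim:
  assumes m: "m \<ge> 2" and fc: "continuous_on {0..1} f" and y: "y \<in> tree_nodes m"
  shows "(\<lambda>j. avgS m j (gF m f) y) \<longlonglongrightarrow> FF m f y"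
proof -
  have "Cauchy (\<lambda>j. avgS m j (gF m f) y)"
  proof (rule CauchyI)
    fix e :: real assume e: "e > 0"
    obtain N where N: "\<forall>y\<in>tree_nodes m. \<forall>j l. length y + j \<ge> N \<longrightarrow>
       \<bar>avgS m (j + l) (gF m f) y - avgS m j (gF m f) y\<bar> \<le> e / 3"
      using cauchy_step[OF m fc, of "e/3"] e by auto
    show "\<exists>M. \<forall>p\<ge>M. \<forall>q\<ge>M. norm (avgS m p (gF m f) y - avgS m q (gF m f) y) < e"
    proof (intro exI[of _ N] allI impI)
      fix p q assume p: "p \<ge> N" and q: "q \<ge> N"
      have a: "\<bar>avgS m (N + (p - N)) (gF m f) y - avgS m N (gF m f) y\<bar> \<le> e / 3" using N y by auto
      have b: "\<bar>avgS m (N + (q - N)) (gF m f) y - avgS m N (gF m f) y\<bar> \<le> e / 3" using N y by auto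
      have "N + (p - N) = p" "N + (q - N) = q" using p q by auto
      with a b have a': "\<bar>avgS m p (gF m f) y - avgS m N (gF m f) y\<bar> \<le> e / 3"
        and b': "\<bar>avgS m q (gF m f) y - avgS m N (gF m f) y\<bar> \<le> e / 3" by simp_all
      show "norm (avgS m p (gF m f) y - avgS m q (gF m f) y) < e"
        unfolding real_norm_def abs_less_iff using a'[unfolded abs_le_iff] b'[unfolded abs_le_iff] e by linarith
    qed
  qed
  then have "convergent (\<lambda>j. avgS m j (gF m f) y)" by (simp add: Cauchy_convergent_iff)
  then show ?thesis unfolding FF_def by (simp add: convergent_LIMSEQ_iff)
qed

lemma FF_avg:
  assumes m: "m \<ge> 2" and fc: "continuous_on {0..1} f" and y: "y \<in> tree_nodes m"
  shows "(\<Sum>a<m. FF m f (y @ [a])) / real m = FF m f y"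
proof -
  have m0: "m > 0" using m by simp
  have "(\<lambda>j. avgS m (Suc j) (gF m f) y) \<longlonglongrightarrow> FF m f y"
    using LIMSEQ_Suc[OF FF_lim[OF m fc y]] .
  moreover have "(\<lambda>j. avgS m (Suc j) (gF m f) y) \<longlonglongrightarrow> (\<Sum>a<m. FF m f (y @ [a])) / real m"
    unfolding avgS_Suc2[OF m0]
    by (intro tendsto_divide tendsto_sum FF_lim[OF m fc] tendsto_const) (use y m0 in \<open>simp_all add: tree_snoc\<close>)
  ultimately show ?thesis using LIMSEQ_unique by metis
qed

lemma FF_bound:
  assumes m: "m \<ge> 2" and fc: "continuous_on {0..1} f" and y: "y \<in> tree_nodes m"
    and M: "\<forall>t\<in>{0..1}. \<bar>f t\<bar> \<le> M"
  shows "\<bar>FF m f y\<bar> \<le> M"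
proof -
  have m0: "m > 0" using m by simp
  have b: "\<bar>avgS m j (gF m f) y\<bar> \<le> M" for j
  proof (rule avgS_bound[OF m0])
    fix w assume w: "w \<in> succs m j y"
    have wT: "w \<in> tree_nodes m" using succs_mem[OF w] y by auto
    have "psi m (ext w) \<in> {0..1}" using psi_01[OF m ext_branch[OF m0 wT]] by simp
    then show "\<bar>gF m f w\<bar> \<le> M" unfolding gF_def using M by blast
  qed
  show ?thesis
    by (rule LIMSEQ_le_const2[OF tendsto_rabs[OF FF_lim[OF m fc y]]]) (use b in auto)
qed

lemma FF_boundary:
  assumes m: "m \<ge> 2" and fc: "continuous_on {0..1} f" and e: "e > 0"
  shows "\<exists>J. \<forall>y\<in>tree_nodes m. \<forall>z\<in>branches m. length y \<ge> J \<and> passes_through z y \<longrightarrow> \<bar>FF m f y - f (psi m z)\<bar> \<le> e"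
proof -
  have m0: "m > 0" using m by simp
  have e2: "e / 2 > 0" using e by simp
  obtain N1 where N1: "\<forall>y\<in>tree_nodes m. \<forall>j l. length y + j \<ge> N1 \<longrightarrow>
     \<bar>avgS m (j + l) (gF m f) y - avgS m j (gF m f) y\<bar> \<le> e / 2"
    using cauchy_step[OF m fc e2] by blast
  obtain N2 where N2: "\<forall>z\<in>branches m. \<forall>z'\<in>branches m. (\<forall>i<N2. z i = z' i) \<longrightarrow> \<bar>f (psi m z) - f (psi m z')\<bar> < e / 2"
    using UCbr[OF m fc e2] by blast
  show ?thesis
  proof (intro exI[of _ "max N1 N2"] ballI impI)
    fix y z assume y: "y \<in> tree_nodes m" and z: "z \<in> branches m" and c: "max N1 N2 \<le> length y \<and> passes_through z y"
    have "\<bar>avgS m l (gF m f) y - gF m f y\<bar> \<le> e / 2" for l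
      using N1[rule_format, OF y, of 0 l] c by simp
    then have a: "\<bar>FF m f y - gF m f y\<bar> \<le> e / 2"
      by (intro LIMSEQ_le_const2[OF tendsto_rabs[OF tendsto_diff[OF FF_lim[OF m fc y] tendsto_const]]]) auto
    have py: "y = map z [0..<length y]" using c unfolding passes_through_def by simp
    have "\<forall>i<N2. ext y i = z i"
    proof (intro allI impI)
      fix i assume "i < N2"
      then have i: "i < length y" using c by simp
      have "y ! i = z i" using py i by (metis add_0 diff_zero length_upt nth_map nth_upt)
      then show "ext y i = z i" unfolding ext_def using i by simp
    qed
    then have "\<bar>f (psi m (ext y)) - f (psi m z)\<bar> < e / 2"
      using N2 ext_branch[OF m0 y] z by blast
    then show "\<bar>FF m f y - f (psi m z)\<bar> \<le> e" using a unfolding gF_def by linarith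
  qed
qed



lemma alg_nonroot0:
  fixes \<beta> q r k G up hx :: real
  assumes "q = 1 - \<beta>" "q * r = \<beta>" "(1 - 2 * \<beta>) * k = 1"
  shows "((1-r)*G + r*up) - \<beta>*up - q*((1-r)*(G - hx*k) + r*((1-r)*G + r*up)) = hx"
  using assms by algebra

lemma alg_root0:
  fixes \<beta> q r k p G h0 :: real
  assumes "q = 1 - \<beta>" "q * r = \<beta>" "(1 - 2 * \<beta>) * k = 1" "(1 - r) * p = 1"
  shows "(G - r * h0 * p) - ((1 - r) * (G - h0 * k) + r * (G - r * h0 * p)) = h0"
  using assms by algebra

lemma one_minus_r: "\<beta> < 1/2 \<Longrightarrow> 1 - \<beta> / (1 - \<beta>) = (1 - 2 * \<beta>) / (1 - (\<beta>::real))"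
  by (simp add: field_simps)

lemma geo_h:
  fixes \<beta> :: real
  assumes b0: "0 \<le> \<beta>" and b: "\<beta> < 1/2"
  shows "(\<lambda>n. \<beta> ^ n / (1 - \<beta>) ^ Suc n * c) sums (c / (1 - 2 * \<beta>))"
proof -
  have n1: "1 - \<beta> > 0" and n2: "1 - 2 * \<beta> > 0" using b by auto
  have nr: "norm (\<beta> / (1 - \<beta>)) = \<beta> / (1 - \<beta>)" using r_facts(1)[OF b0 b] by (simp only: real_norm_def abs_of_nonneg)
  have r: "norm (\<beta> / (1 - \<beta>)) < 1" unfolding nr using r_facts(2)[OF b0 b] .
  have s1: "(\<lambda>n. c / (1 - \<beta>) * (\<beta> / (1 - \<beta>)) ^ n) sums (c / (1 - \<beta>) * (1 / (1 - \<beta> / (1 - \<beta>))))"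
    by (rule sums_mult[OF geometric_sums[OF r]])
  have e1: "(\<lambda>n. c / (1 - \<beta>) * (\<beta> / (1 - \<beta>)) ^ n) = (\<lambda>n. \<beta> ^ n / (1 - \<beta>) ^ Suc n * c)"
    by (simp add: fun_eq_iff power_divide)
  have e2: "c / (1 - \<beta>) * (1 / (1 - \<beta> / (1 - \<beta>))) = c / (1 - 2 * \<beta>)"
    unfolding one_minus_r[OF b] using n1 n2 by simp
  show ?thesis using s1 unfolding e1 e2 .
qed

lemma S_term_split:
  assumes m0: "m > 0"
  shows "S_term m \<beta> h x (Suc n) = \<beta> ^ n / (1 - \<beta>) ^ Suc n * h x + (\<Sum>a<m. S_term m \<beta> h (x @ [a]) n) / real m"
proof -
  have "S_term m \<beta> h x (Suc n) = \<beta> ^ n / (1 - \<beta>) ^ Suc n * h x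
      + (\<Sum>j<n. \<beta> ^ (n - j - 1) / (1 - \<beta>) ^ (n - j) * avgS m (Suc j) h x)"
    unfolding S_term_avg sum.lessThan_Suc_shift by simp
  also have "(\<Sum>j<n. \<beta> ^ (n - j - 1) / (1 - \<beta>) ^ (n - j) * avgS m (Suc j) h x)
      = (\<Sum>j<n. \<Sum>a<m. \<beta> ^ (n - j - 1) / (1 - \<beta>) ^ (n - j) * avgS m j h (x @ [a]) / real m)"
    unfolding avgS_Suc2[OF m0] by (simp add: sum_distrib_left sum_divide_distrib)
  also have "\<dots> = (\<Sum>a<m. \<Sum>j<n. \<beta> ^ (n - j - 1) / (1 - \<beta>) ^ (n - j) * avgS m j h (x @ [a]) / real m)"
    by (rule sum.swap)
  also have "\<dots> = (\<Sum>a<m. S_term m \<beta> h (x @ [a]) n) / real m"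
    unfolding S_term_avg by (simp add: sum_divide_distrib)
  finally show ?thesis .
qed

lemma S_avg:
  assumes m: "m \<ge> 2" and b0: "0 \<le> \<beta>" and b: "\<beta> < 1/2"
    and conv: "\<forall>y\<in>tree_nodes m. S_conv m \<beta> h y" and x: "x \<in> tree_nodes m"
  shows "S_beta m \<beta> h x = h x / (1 - 2 * \<beta>) + (\<Sum>a<m. S_beta m \<beta> h (x @ [a])) / real m"
proof -
  have m0: "m > 0" using m by simp
  have c2: "(\<lambda>n. S_term m \<beta> h y n) sums S_beta m \<beta> h y" if y: "y \<in> tree_nodes m" for y
  proof -
    have "(\<lambda>n. S_term m \<beta> h y (Suc n)) sums S_beta m \<beta> h y"
      using conv y unfolding S_conv_def S_beta_def by (simp add: summable_sums)
    then show ?thesis unfolding sums_Suc_iff by simp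
  qed
  have "(\<lambda>n. \<beta> ^ n / (1 - \<beta>) ^ Suc n * h x + (\<Sum>a<m. S_term m \<beta> h (x @ [a]) n) / real m)
      sums (h x / (1 - 2 * \<beta>) + (\<Sum>a<m. S_beta m \<beta> h (x @ [a])) / real m)"
    by (intro sums_add geo_h[OF b0 b] sums_divide sums_sum c2) (use x in \<open>simp add: tree_snoc\<close>)
  then have "(\<lambda>n. S_term m \<beta> h x (Suc n)) sums (h x / (1 - 2 * \<beta>) + (\<Sum>a<m. S_beta m \<beta> h (x @ [a])) / real m)"
    unfolding S_term_split[OF m0] .
  then show ?thesis unfolding S_beta_def by (rule sums_unique[symmetric])
qed

definition Wt :: "real \<Rightarrow> (nat list \<Rightarrow> real) \<Rightarrow> real \<Rightarrow> nat list \<Rightarrow> real" where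
  "Wt r G c x = (1 - r) * (\<Sum>j=1..length x. r ^ (length x - j) * G (take j x)) + r ^ (length x) * c"

lemma Wt_nil[simp]: "Wt r G c [] = c"
  unfolding Wt_def by simp

lemma Wt_snoc: "Wt r G c (x @ [a]) = (1 - r) * G (x @ [a]) + r * Wt r G c x"
proof -
  let ?k = "length x"
  have "(\<Sum>j=1..Suc ?k. r ^ (Suc ?k - j) * G (take j (x @ [a])))
      = (\<Sum>j=1..?k. r ^ (Suc ?k - j) * G (take j (x @ [a]))) + G (x @ [a])" by simp
  also have "(\<Sum>j=1..?k. r ^ (Suc ?k - j) * G (take j (x @ [a]))) = r * (\<Sum>j=1..?k. r ^ (?k - j) * G (take j x))"
    unfolding sum_distrib_left
  proof (rule sum.cong)
    fix j assume j: "j \<in> {1..?k}"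
    then have "Suc ?k - j = Suc (?k - j)" "take j (x @ [a]) = take j x" by auto
    then show "r ^ (Suc ?k - j) * G (take j (x @ [a])) = r * (r ^ (?k - j) * G (take j x))" by simp
  qed simp
  finally have "(\<Sum>j=1..Suc ?k. r ^ (Suc ?k - j) * G (take j (x @ [a]))) = r * (\<Sum>j=1..?k. r ^ (?k - j) * G (take j x)) + G (x @ [a])" .
  then show ?thesis unfolding Wt_def by (simp add: algebra_simps)
qed

lemma Wt_add: "Wt r (\<lambda>y. F y + S y) (c1 + c2) x = Wt r F c1 x + Wt r S c2 x"
  unfolding Wt_def by (simp add: sum.distrib algebra_simps)

lemma Wt_zero_S: "Wt r S 0 x = (1 - r) * (\<Sum>j=1..length x. r ^ (length x - j) * S (take j x))"
  unfolding Wt_def by simp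

lemma bd_bounded:
  assumes m: "m \<ge> 2" and B: "boundary_eq m u f" and M: "\<forall>t\<in>{0..1}. \<bar>f t\<bar> \<le> M"
  shows "\<exists>C. \<forall>x\<in>tree_nodes m. \<bar>u x\<bar> \<le> C"
proof -
  have m0: "m > 0" using m by simp
  obtain K where K: "\<forall>x\<in>tree_nodes m. \<forall>z\<in>branches m. K \<le> length x \<and> passes_through z x \<longrightarrow> \<bar>u x - f (psi m z)\<bar> < 1"
    using B[unfolded boundary_eq_def, rule_format, of 1] by auto
  define A where "A = {x \<in> tree_nodes m. length x < K}"
  have fA: "finite A"
  proof -
    have "A \<subseteq> {xs. set xs \<subseteq> {..<m} \<and> length xs \<le> K}" unfolding A_def tree_nodes_def by auto
    moreover have "finite {xs. set xs \<subseteq> {..<m} \<and> length xs \<le> K}"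
      by (rule finite_lists_length_le) auto
    ultimately show ?thesis by (rule finite_subset)
  qed
  have M0: "0 \<le> M" using M by (metis abs_ge_zero atLeastAtMost_iff order_trans zero_le_one order_refl)
  show ?thesis
  proof (intro exI[of _ "M + 1 + (\<Sum>y\<in>A. \<bar>u y\<bar>)"] ballI)
    fix x assume x: "x \<in> tree_nodes m"
    have s0: "0 \<le> (\<Sum>y\<in>A. \<bar>u y\<bar>)" by (rule sum_nonneg) simp
    show "\<bar>u x\<bar> \<le> M + 1 + (\<Sum>y\<in>A. \<bar>u y\<bar>)"
    proof (cases "length x < K")
      case True
      then have "x \<in> A" unfolding A_def using x by simp
      then have "\<bar>u x\<bar> \<le> (\<Sum>y\<in>A. \<bar>u y\<bar>)" using fA by (intro member_le_sum) auto
      then show ?thesis using M0 by linarith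
    next
      case False
      have zb: "ext x \<in> branches m" by (rule ext_branch[OF m0 x])
      have "\<bar>u x - f (psi m (ext x))\<bar> < 1" using K x zb ext_passes False by auto
      moreover have "\<bar>f (psi m (ext x))\<bar> \<le> M" using M psi_01[OF m zb] by auto
      ultimately show ?thesis using s0 by linarith
    qed
  qed
qed



lemma conv_bound:
  fixes r a b B :: real
  assumes "0 \<le> r" "r \<le> 1" "\<bar>a\<bar> \<le> B" "\<bar>b\<bar> \<le> B"
  shows "\<bar>(1 - r) * a + r * b\<bar> \<le> B"
proof -
  have "\<bar>(1 - r) * a + r * b\<bar> \<le> \<bar>(1 - r) * a\<bar> + \<bar>r * b\<bar>" by (rule abs_triangle_ineq)
  also have "\<dots> = (1 - r) * \<bar>a\<bar> + r * \<bar>b\<bar>" using assms by (simp add: abs_mult)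
  also have "\<dots> \<le> (1 - r) * B + r * B" using assms by (intro add_mono mult_left_mono) auto
  also have "\<dots> = B" by (simp add: algebra_simps)
  finally show ?thesis .
qed

lemma conv_step:
  fixes r a b t e d :: real
  assumes "0 \<le> r" "r \<le> 1" "\<bar>a - t\<bar> \<le> e" "\<bar>b - t\<bar> \<le> e + d"
  shows "\<bar>(1 - r) * a + r * b - t\<bar> \<le> e + r * d"
proof -
  have "(1 - r) * a + r * b - t = (1 - r) * (a - t) + r * (b - t)" by (simp add: algebra_simps)
  then have "\<bar>(1 - r) * a + r * b - t\<bar> \<le> \<bar>(1 - r) * (a - t)\<bar> + \<bar>r * (b - t)\<bar>" using abs_triangle_ineq by metis
  also have "\<dots> = (1 - r) * \<bar>a - t\<bar> + r * \<bar>b - t\<bar>" using assms by (simp add: abs_mult)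
  also have "\<dots> \<le> (1 - r) * e + r * (e + d)" using assms by (intro add_mono mult_left_mono) auto
  also have "\<dots> = e + r * d" by (simp add: algebra_simps)
  finally show ?thesis .
qed

lemma existence:
  assumes m: "m \<ge> 2" and b0: "0 \<le> \<beta>" and b: "\<beta> < 1/2"
    and conv: "\<forall>x\<in>tree_nodes m. S_conv m \<beta> h x"
    and lim: "(\<lambda>k. SUP x\<in>{x\<in>tree_nodes m. length x = k}.
                 \<bar>\<Sum>j=1..k. (\<beta> / (1 - \<beta>)) ^ (k - j) * S_beta m \<beta> h (take j x)\<bar>) \<longlonglongrightarrow> 0"
    and fc: "continuous_on {0..1} f"
  shows "\<exists>u. (\<exists>C. \<forall>x\<in>tree_nodes m. \<bar>u x\<bar> \<le> C)
                 \<and> (\<forall>x\<in>tree_nodes m. avg_op m \<beta> u x = h x)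
                 \<and> boundary_eq m u f
                 \<and> (\<forall>v. (\<exists>C. \<forall>x\<in>tree_nodes m. \<bar>v x\<bar> \<le> C)
                        \<and> (\<forall>x\<in>tree_nodes m. avg_op m \<beta> v x = h x)
                        \<and> boundary_eq m v f
                        \<longrightarrow> (\<forall>x\<in>tree_nodes m. v x = u x))"
proof -
  have m0: "m > 0" using m by simp
  define r where "r = \<beta> / (1 - \<beta>)"
  have r0: "0 \<le> r" and r1: "r < 1" using r_facts[OF b0 b] unfolding r_def by auto
  define k where "k = 1 / (1 - 2 * \<beta>)"
  define p where "p = 1 / (1 - r)"
  have qr: "(1 - \<beta>) * r = \<beta>" unfolding r_def using b by simp
  have kk: "(1 - 2 * \<beta>) * k = 1" unfolding k_def using b by simp
  have pp: "(1 - r) * p = 1" unfolding p_def using r1 by simp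
  obtain M where M: "\<forall>t\<in>{0..1}. \<bar>f t\<bar> \<le> M" using f_bounded[OF fc] by blast
  define S where "S = S_beta m \<beta> h"
  define F where "F = FF m f"
  define G where "G y = F y + S y" for y
  define u0 where "u0 = G [] - r * h [] * p"
  define u where "u = Wt r G u0"
  have Gavg: "(\<Sum>a<m. G (y @ [a])) / real m = G y - h y * k" if y: "y \<in> tree_nodes m" for y
  proof -
    have "(\<Sum>a<m. G (y @ [a])) / real m = (\<Sum>a<m. F (y @ [a])) / real m + (\<Sum>a<m. S (y @ [a])) / real m"
      unfolding G_def by (simp add: sum.distrib add_divide_distrib)
    also have "\<dots> = F y + (S y - h y * k)"
      unfolding F_def S_def FF_avg[OF m fc y] S_avg[OF m b0 b conv y] k_def by simp
    finally show ?thesis unfolding G_def by simp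
  qed
  have cavg: "(\<Sum>a<m. u (x @ [a])) / real m = (1 - r) * (G x - h x * k) + r * u x" if x: "x \<in> tree_nodes m" for x
  proof -
    have "(\<Sum>a<m. u (x @ [a])) = (1 - r) * (\<Sum>a<m. G (x @ [a])) + real m * (r * u x)"
      unfolding u_def Wt_snoc by (simp add: sum.distrib sum_distrib_left)
    then have "(\<Sum>a<m. u (x @ [a])) / real m = (1 - r) * ((\<Sum>a<m. G (x @ [a])) / real m) + r * u x"
      using m0 by (simp add: add_divide_distrib)
    then show ?thesis unfolding Gavg[OF x] .
  qed
  have Lu: "\<forall>x\<in>tree_nodes m. avg_op m \<beta> u x = h x"
  proof
    fix x assume x: "x \<in> tree_nodes m"
    show "avg_op m \<beta> u x = h x"
    proof (cases "x = []")
      case True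
      have c: "(\<Sum>a<m. u [a]) / real m = (1 - r) * (G [] - h [] * k) + r * u0"
        using cavg[OF x] True unfolding u_def by simp
      have "avg_op m \<beta> u x = u0 - (\<Sum>a<m. u [a]) / real m"
        unfolding avg_op_def using True unfolding u_def by simp
      also have "\<dots> = h x" unfolding c u0_def using True
        alg_root0[OF refl qr kk pp, of "G []" "h []"] by simp
      finally show ?thesis .
    next
      case False
      then have xs: "x = butlast x @ [last x]" by simp
      have ux: "u x = (1 - r) * G x + r * u (butlast x)"
        unfolding u_def by (subst xs, subst Wt_snoc, subst xs[symmetric]) simp
      have "avg_op m \<beta> u x = u x - \<beta> * u (butlast x) - (1 - \<beta>) * ((\<Sum>a<m. u (x @ [a])) / real m)"
        unfolding avg_op_def using False by simp
      also have "\<dots> = h x" unfolding cavg[OF x] ux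
        by (rule alg_nonroot0[OF refl qr kk])
      finally show ?thesis .
    qed
  qed
  define uF where "uF = Wt r F u0"
  define Q where "Q x = (\<Sum>j=1..length x. r ^ (length x - j) * S (take j x))" for x
  have usplit: "u x = uF x + (1 - r) * Q x" for x
  proof -
    have "u x = Wt r (\<lambda>y. F y + S y) (u0 + 0) x" unfolding u_def G_def by simp
    also have "\<dots> = uF x + (1 - r) * Q x" unfolding Wt_add uF_def Wt_zero_S Q_def ..
    finally show ?thesis .
  qed
  define B0 where "B0 = max M \<bar>u0\<bar>"
  have FB: "\<bar>F y\<bar> \<le> M" if "y \<in> tree_nodes m" for y
    unfolding F_def by (rule FF_bound[OF m fc that M])
  have uFB: "\<bar>uF x\<bar> \<le> B0" if "x \<in> tree_nodes m" for x
    using that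
  proof (induction x rule: rev_induct)
    case Nil then show ?case unfolding uF_def B0_def by simp
  next
    case (snoc a xs)
    then have xs: "xs \<in> tree_nodes m" by (simp add: tree_snoc)
    have "\<bar>F (xs @ [a])\<bar> \<le> B0" using FB[OF snoc.prems] unfolding B0_def by simp
    then show ?case unfolding uF_def Wt_snoc
      using conv_bound[OF r0 _ _ snoc.IH[OF xs, unfolded uF_def]] r1 by simp
  qed
  have M0: "0 \<le> M" using M by (metis abs_ge_zero atLeastAtMost_iff order_trans zero_le_one order_refl)
  have Bd: "boundary_eq m u f"
    unfolding boundary_eq_def
  proof (intro allI impI)
    fix \<epsilon> :: real assume eps: "\<epsilon> > 0"
    define e4 where "e4 = \<epsilon> / 4"
    have e4: "e4 > 0" unfolding e4_def using eps by simp
    obtain J where J: "\<forall>y\<in>tree_nodes m. \<forall>z\<in>branches m. length y \<ge> J \<and> passes_through z y \<longrightarrow> \<bar>F y - f (psi m z)\<bar> \<le> e4"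
      using FF_boundary[OF m fc e4] unfolding F_def by blast
    have "(\<lambda>n. r ^ n * (B0 + M)) \<longlonglongrightarrow> 0 * (B0 + M)"
      by (intro tendsto_mult_right LIMSEQ_power_zero) (use r0 r1 in simp)
    then obtain K2 where K2: "\<forall>n\<ge>K2. norm (r ^ n * (B0 + M) - 0) < e4"
      using LIMSEQ_D[OF _ e4] by fastforce
    obtain K3 where K3: "\<forall>k\<ge>K3. \<forall>x\<in>tree_nodes m. length x = k \<longrightarrow>
        \<bar>\<Sum>j=1..k. r ^ (k - j) * S (take j x)\<bar> < e4"
      using SUP_bound_from[OF lim[folded r_def S_def] e4] by blast
    show "\<exists>K. \<forall>x\<in>tree_nodes m. \<forall>z\<in>branches m. K \<le> length x \<and> passes_through z x \<longrightarrow> \<bar>u x - f (psi m z)\<bar> < \<epsilon>"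
    proof (intro exI[of _ "max (J + K2) K3"] ballI impI)
      fix x z assume x: "x \<in> tree_nodes m" and z: "z \<in> branches m"
        and c: "max (J + K2) K3 \<le> length x \<and> passes_through z x"
      define t where "t = f (psi m z)"
      have tM: "\<bar>t\<bar> \<le> M" unfolding t_def using M psi_01[OF m z] by auto
      have tk: "take i x \<in> tree_nodes m" for i
        using x unfolding tree_nodes_def by (auto dest: in_set_takeD)
      have claim: "J + n \<le> length x \<longrightarrow> \<bar>uF (take (J + n) x) - t\<bar> \<le> e4 + r ^ n * (B0 + M)" for n
      proof (induction n)
        case 0
        have "\<bar>uF (take J x) - t\<bar> \<le> B0 + M" using uFB[OF tk[of J]] tM by linarith
        then show ?case using e4 by simp
      next
        case (Suc n)
        show ?case
        proof
          assume l: "J + Suc n \<le> length x"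
          define i where "i = J + n"
          have il: "i < length x" using l unfolding i_def by simp
          have tS: "take (Suc i) x = take i x @ [x ! i]" by (rule take_Suc_conv_app_nth[OF il])
          have IH: "\<bar>uF (take i x) - t\<bar> \<le> e4 + r ^ n * (B0 + M)" using Suc l unfolding i_def by simp
          have pz: "passes_through z (take (Suc i) x)" using passes_take c il by simp
          have Fc: "\<bar>F (take (Suc i) x) - t\<bar> \<le> e4"
            using J tk[of "Suc i"] z pz il unfolding t_def i_def by auto
          have "uF (take (Suc i) x) = (1 - r) * F (take (Suc i) x) + r * uF (take i x)"
            unfolding uF_def tS Wt_snoc ..
          then have "\<bar>uF (take (Suc i) x) - t\<bar> \<le> e4 + r * (r ^ n * (B0 + M))"
            using conv_step[OF r0 _ Fc IH] r1 by simp
          then show "\<bar>uF (take (J + Suc n) x) - t\<bar> \<le> e4 + r ^ Suc n * (B0 + M)"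
            unfolding i_def by (simp add: mult.assoc)
        qed
      qed
      define n where "n = length x - J"
      have Jn: "J + n = length x" unfolding n_def using c by simp
      have "\<bar>uF x - t\<bar> \<le> e4 + r ^ n * (B0 + M)" using claim[of n] Jn by simp
      moreover have "r ^ n * (B0 + M) < e4"
      proof -
        have nK: "n \<ge> K2" unfolding n_def using c by linarith
        have "norm (r ^ n * (B0 + M) - 0) < e4" using K2 nK by blast
        moreover have "r ^ n * (B0 + M) \<le> norm (r ^ n * (B0 + M) - 0)" by simp
        ultimately show ?thesis by linarith
      qed
      moreover have "\<bar>Q x\<bar> < e4" using K3 c x unfolding Q_def by auto
      moreover have "\<bar>(1 - r) * Q x\<bar> \<le> \<bar>Q x\<bar>" using r0 r1 by (simp add: abs_mult mult_left_le_one_le)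
      ultimately have "\<bar>u x - t\<bar> < 4 * e4" unfolding usplit by linarith
      then show "\<bar>u x - f (psi m z)\<bar> < \<epsilon>" unfolding t_def e4_def by simp
    qed
  qed
  have bnd: "\<exists>C. \<forall>x\<in>tree_nodes m. \<bar>u x\<bar> \<le> C" by (rule bd_bounded[OF m Bd M])
  have uniq: "\<forall>x\<in>tree_nodes m. v x = u x"
    if v: "(\<exists>C. \<forall>x\<in>tree_nodes m. \<bar>v x\<bar> \<le> C) \<and> (\<forall>x\<in>tree_nodes m. avg_op m \<beta> v x = h x) \<and> boundary_eq m v f" for v
  proof -
    define w where "w x = v x - u x" for x
    have Lw: "\<forall>y\<in>tree_nodes m. avg_op m \<beta> w y = 0"
      using v Lu unfolding w_def[abs_def] by (simp add: avg_op_diff)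
    have "boundary_eq m w (\<lambda>t. f t - f t)"
      unfolding w_def[abs_def] using boundary_diff v Bd by blast
    then have Bw: "boundary_eq m w (\<lambda>_. 0)" by simp
    show ?thesis using uniq0[OF m0 b0 b Lw Bw] unfolding w_def by simp
  qed
  show ?thesis using bnd Lu Bd uniq by blast
qed


theorem theorem1p2:
  fixes m :: nat and \<beta> :: real and h :: "nat list \<Rightarrow> real"
  assumes "m \<ge> 2" and "0 \<le> \<beta>" and "\<beta> \<le> 1"
  shows "(\<forall>f :: real \<Rightarrow> real. continuous_on {0..1} f \<longrightarrow>
            (\<exists>u. (\<exists>C. \<forall>x\<in>tree_nodes m. \<bar>u x\<bar> \<le> C)
                 \<and> (\<forall>x\<in>tree_nodes m. avg_op m \<beta> u x = h x)
                 \<and> boundary_eq m u f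
                 \<and> (\<forall>v. (\<exists>C. \<forall>x\<in>tree_nodes m. \<bar>v x\<bar> \<le> C)
                        \<and> (\<forall>x\<in>tree_nodes m. avg_op m \<beta> v x = h x)
                        \<and> boundary_eq m v f
                        \<longrightarrow> (\<forall>x\<in>tree_nodes m. v x = u x))))
         \<longleftrightarrow>
         (0 \<le> \<beta> \<and> \<beta> < 1/2
          \<and> (\<forall>x\<in>tree_nodes m. S_conv m \<beta> h x)
          \<and> ((\<lambda>k. SUP x\<in>{x\<in>tree_nodes m. length x = k}.
                 \<bar>\<Sum>j=1..k. (\<beta> / (1 - \<beta>)) ^ (k - j) * S_beta m \<beta> h (take j x)\<bar>)
               \<longlonglongrightarrow> 0))"
proof
  assume H: "\<forall>f :: real \<Rightarrow> real. continuous_on {0..1} f \<longrightarrow>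
            (\<exists>u. (\<exists>C. \<forall>x\<in>tree_nodes m. \<bar>u x\<bar> \<le> C)
                 \<and> (\<forall>x\<in>tree_nodes m. avg_op m \<beta> u x = h x)
                 \<and> boundary_eq m u f
                 \<and> (\<forall>v. (\<exists>C. \<forall>x\<in>tree_nodes m. \<bar>v x\<bar> \<le> C)
                        \<and> (\<forall>x\<in>tree_nodes m. avg_op m \<beta> v x = h x)
                        \<and> boundary_eq m v f
                        \<longrightarrow> (\<forall>x\<in>tree_nodes m. v x = u x)))"
  have c0: "continuous_on {0..1} (\<lambda>_::real. 0::real)" by (rule continuous_on_const)
  have c1: "continuous_on {0..1} (\<lambda>t::real. t)" by (rule continuous_on_id)
  obtain u0 where L0: "\<forall>x\<in>tree_nodes m. avg_op m \<beta> u0 x = h x" and B0: "boundary_eq m u0 (\<lambda>_. 0)"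
    using H c0 by blast
  obtain u1 where L1: "\<forall>x\<in>tree_nodes m. avg_op m \<beta> u1 x = h x" and B1: "boundary_eq m u1 (\<lambda>t. t)"
    using H c1 by blast
  have b: "\<beta> < 1/2" by (rule beta_small[OF assms L0 B0 L1 B1])
  show "0 \<le> \<beta> \<and> \<beta> < 1/2
          \<and> (\<forall>x\<in>tree_nodes m. S_conv m \<beta> h x)
          \<and> ((\<lambda>k. SUP x\<in>{x\<in>tree_nodes m. length x = k}.
                 \<bar>\<Sum>j=1..k. (\<beta> / (1 - \<beta>)) ^ (k - j) * S_beta m \<beta> h (take j x)\<bar>)
               \<longlonglongrightarrow> 0)"
    using nec_cond[OF assms(1) assms(2) b L0 B0] assms(2) b by blast
next
  assume R: "0 \<le> \<beta> \<and> \<beta> < 1/2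
          \<and> (\<forall>x\<in>tree_nodes m. S_conv m \<beta> h x)
          \<and> ((\<lambda>k. SUP x\<in>{x\<in>tree_nodes m. length x = k}.
                 \<bar>\<Sum>j=1..k. (\<beta> / (1 - \<beta>)) ^ (k - j) * S_beta m \<beta> h (take j x)\<bar>)
               \<longlonglongrightarrow> 0)"
  show "\<forall>f :: real \<Rightarrow> real. continuous_on {0..1} f \<longrightarrow>
            (\<exists>u. (\<exists>C. \<forall>x\<in>tree_nodes m. \<bar>u x\<bar> \<le> C)
                 \<and> (\<forall>x\<in>tree_nodes m. avg_op m \<beta> u x = h x)
                 \<and> boundary_eq m u f
                 \<and> (\<forall>v. (\<exists>C. \<forall>x\<in>tree_nodes m. \<bar>v x\<bar> \<le> C)
                        \<and> (\<forall>x\<in>tree_nodes m. avg_op m \<beta> v x = h x)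
                        \<and> boundary_eq m v f
                        \<longrightarrow> (\<forall>x\<in>tree_nodes m. v x = u x)))"
    using existence[OF assms(1)] R by blast
qed

end
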